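(* Let $D\subset\mathbb{R}^n$ be a convex domain and $p\in\partial D$. If $p$ is a strictly convex boundary point of $D$, then $\lim_{x\to p,\,x\in D} s_D(x)=1$.
   Context: A projective map of $\mathbb{R}^n\subset\mathbb{P}\mathbb{R}^n$ is a (linear-fractional) map induced by a linear map of $\mathbb{R}^{n+1}$ acting on homogeneous coordinates, where $\mathbb{R}^n$ is embedded as the points $(1:x_1:\dots:x_n)$. For a domain $D\subset\mathbb{R}^n$ and $z\in D$, the (projective) squeezing function is $s_D(z)=\sup\{r>0:\ \exists$ a projective map $\Phi$ with $\Phi(z)=0$, $\Phi(D)\subset B(0,1)$ and $B(0,r)\subset\Phi(D)\}$ (open Euclidean balls), with $s_D(z)=0$ if no such $\Phi$ exists. A point $p\in\partial D$ is strictly convex if $\partial D$ is $\mathcal{C}^2$-smooth in a neighborhood of $p$ and the restriction to the tangent hyperplane at $p$ of the Hessian of a (local) defining function of $D$ is positive definite. *)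

theory Defs
  imports "HOL-Analysis.Analysis"
begin

text \<open>R^n is modelled by a Euclidean space 'a; R^(n+1) (homogeneous coordinates)
  by real \<times> 'a, a point x of R^n corresponding to (1 : x).
  A projective map is induced by an invertible linear map f of real \<times> 'a.\<close>

definition proj_lin :: "(real \<times> 'a::euclidean_space \<Rightarrow> real \<times> 'a) \<Rightarrow> bool" where
  "proj_lin f \<longleftrightarrow> linear f \<and> bij f"

definition proj_map :: "(real \<times> 'a::euclidean_space \<Rightarrow> real \<times> 'a) \<Rightarrow> 'a \<Rightarrow> 'a" where
  "proj_map f x = inverse (fst (f (1, x))) *\<^sub>R snd (f (1, x))"

text \<open>f induces a map defined on D with values in R^n: no point of D is sent to the
  hyperplane at infinity.\<close>
definition proj_defined_on :: "(real \<times> 'a::euclidean_space \<Rightarrow> real \<times> 'a) \<Rightarrow> 'a set \<Rightarrow> bool" where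
  "proj_defined_on f D \<longleftrightarrow> (\<forall>x\<in>D. fst (f (1, x)) \<noteq> 0)"

definition squeeze_radii :: "'a::euclidean_space set \<Rightarrow> 'a \<Rightarrow> real set" where
  "squeeze_radii D z = {r. r > 0 \<and> (\<exists>f. proj_lin f \<and> proj_defined_on f D \<and>
      proj_map f z = 0 \<and> proj_map f ` D \<subseteq> ball 0 1 \<and> ball 0 r \<subseteq> proj_map f ` D)}"

definition squeezing :: "'a::euclidean_space set \<Rightarrow> 'a \<Rightarrow> real" where
  "squeezing D z = (if squeeze_radii D z = {} then 0 else Sup (squeeze_radii D z))"

definition strictly_convex_point :: "'a::euclidean_space set \<Rightarrow> 'a \<Rightarrow> bool" where
  "strictly_convex_point D p \<longleftrightarrow>
    (\<exists>U (\<rho>::'a \<Rightarrow> real) (g::'a \<Rightarrow> 'a) (H::'a \<Rightarrow> 'a \<Rightarrow>\<^sub>L 'a).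
       open U \<and> p \<in> U \<and>
       (\<forall>x\<in>U. (\<rho> has_derivative (\<lambda>v. g x \<bullet> v)) (at x)) \<and>
       (\<forall>x\<in>U. (g has_derivative blinfun_apply (H x)) (at x)) \<and>
       continuous_on U H \<and>
       (\<forall>x\<in>U. g x \<noteq> 0) \<and>
       D \<inter> U = {x\<in>U. \<rho> x < 0} \<and>
       (\<forall>v. v \<noteq> 0 \<and> g p \<bullet> v = 0 \<longrightarrow> v \<bullet> blinfun_apply (H p) v > 0))"

end

theory Submission
  imports Defs
begin


lemma pyth: fixes a b :: "'a::real_inner" shows "a \<bullet> b = 0 \<Longrightarrow> (norm (a+b))\<^sup>2 = (norm a)\<^sup>2 + (norm b)\<^sup>2"
  by (simp add: power2_norm_eq_inner inner_add_left inner_add_right inner_commute)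

lemma form_sqrt_aux:
  fixes S :: "'a::euclidean_space \<Rightarrow> 'a"
  assumes lin: "linear S" and sym: "\<And>x y. x \<bullet> S y = y \<bullet> S x"
    and pos: "\<And>x. x \<noteq> 0 \<Longrightarrow> x \<bullet> S x > 0"
  shows "\<forall>V. subspace V \<and> dim V \<le> n \<longrightarrow> (\<exists>R::'a\<Rightarrow>'a. linear R \<and> (\<forall>x\<in>V. (norm (R x))\<^sup>2 = x \<bullet> S x))"
proof (induction n)
  case 0
  show ?case
  proof (intro allI impI)
    fix V :: "'a set" assume V: "subspace V \<and> dim V \<le> 0"
    then have "V = {0}"
      by (metis dim_eq_0 le_zero_eq span_eq_iff span_empty subset_singletonD subspace_0 empty_iff insert_iff)
    then show "\<exists>R::'a\<Rightarrow>'a. linear R \<and> (\<forall>x\<in>V. (norm (R x))\<^sup>2 = x \<bullet> S x)"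
      proof - have "linear (\<lambda>x::'a. 0::'a)" by (simp add: linear_zero) then show ?thesis using \<open>V = {0}\<close> by (intro exI[where x="\<lambda>x::'a. 0::'a"]) auto qed
  qed
next
  case (Suc n)
  show ?case
  proof (intro allI impI)
    fix V :: "'a set" assume V: "subspace V \<and> dim V \<le> Suc n"
    show "\<exists>R::'a\<Rightarrow>'a. linear R \<and> (\<forall>x\<in>V. (norm (R x))\<^sup>2 = x \<bullet> S x)"
    proof (cases "V = {0}")
      case True
      show ?thesis proof - have "linear (\<lambda>x::'a. 0::'a)" by (simp add: linear_zero) then show ?thesis using \<open>V = {0}\<close> by (intro exI[where x="\<lambda>x::'a. 0::'a"]) auto qed
    next
      case False
      with V obtain v where v: "v \<in> V" "v \<noteq> 0"
        using subspace_0[of V] by blast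
      define v0 where "v0 = (1 / sqrt (v \<bullet> S v)) *\<^sub>R v"
      have vpos: "v \<bullet> S v > 0" using pos v by auto
      have Sv0: "v0 \<bullet> S v0 = 1"
        using vpos unfolding v0_def by (simp add: linear_scale[OF lin] inner_scaleR_left inner_scaleR_right)
      have v0V: "v0 \<in> V" using v V unfolding v0_def by (simp add: subspace_scale)
      define V' where "V' = {x\<in>V. x \<bullet> S v0 = 0}"
      have subV': "subspace V'"
        using V unfolding V'_def subspace_def by (auto simp: inner_add_left inner_scaleR_left)
      have "v0 \<notin> V'" unfolding V'_def using Sv0 by simp
      moreover have "V' \<subseteq> V" unfolding V'_def by auto
      ultimately have "V' \<subset> V" using v0V by blast
      then have "dim V' < dim V"
        using subV' V by (metis dim_psubset span_eq_iff)
      then have dV': "dim V' \<le> n" using V by auto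
      with Suc.IH subV' obtain R' :: "'a \<Rightarrow> 'a" where R': "linear R'" "\<And>x. x\<in>V' \<Longrightarrow> (norm (R' x))\<^sup>2 = x \<bullet> S x"
        by blast
      have "dim (R' ` V') \<le> dim V'" by (rule dim_image_le[OF R'(1)])
      also have "\<dots> < dim V" by fact
      also have "\<dots> \<le> DIM('a)" by (rule dim_subset_UNIV)
      finally obtain e0 where e0: "e0 \<noteq> 0" "\<And>y. y \<in> span (R' ` V') \<Longrightarrow> orthogonal e0 y"
        using orthogonal_to_subspace_exists by blast
      define e where "e = e0 /\<^sub>R norm e0"
      have ne: "norm e = 1" using e0 unfolding e_def by simp
      have eo: "e \<bullet> R' x = 0" if "x \<in> V'" for x
        using e0(2)[of "R' x"] that unfolding e_def orthogonal_def
        by (simp add: span_base)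
      define R where "R x = R' (x - (x \<bullet> S v0) *\<^sub>R v0) + (x \<bullet> S v0) *\<^sub>R e" for x
      have linR: "linear R"
      proof (rule linearI)
        fix x y
        have "x + y - ((x + y) \<bullet> S v0) *\<^sub>R v0 = (x - (x \<bullet> S v0) *\<^sub>R v0) + (y - (y \<bullet> S v0) *\<^sub>R v0)"
          by (simp add: inner_add_left algebra_simps)
        note eq = this
        have "R (x + y) = R' (x + y - ((x + y) \<bullet> S v0) *\<^sub>R v0) + ((x + y) \<bullet> S v0) *\<^sub>R e"
          by (simp only: R_def)
        also have "\<dots> = (R' (x - (x \<bullet> S v0) *\<^sub>R v0) + R' (y - (y \<bullet> S v0) *\<^sub>R v0)) + ((x \<bullet> S v0) + (y \<bullet> S v0)) *\<^sub>R e"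
          by (subst eq, subst linear_add[OF R'(1)], simp add: inner_add_left)
        also have "\<dots> = R x + R y" by (simp add: R_def algebra_simps)
        finally show "R (x + y) = R x + R y" .
      next
        fix c x
        have "c *\<^sub>R x - ((c *\<^sub>R x) \<bullet> S v0) *\<^sub>R v0 = c *\<^sub>R (x - (x \<bullet> S v0) *\<^sub>R v0)"
          by (simp add: algebra_simps)
        note eq = this
        have "R (c *\<^sub>R x) = R' (c *\<^sub>R x - ((c *\<^sub>R x) \<bullet> S v0) *\<^sub>R v0) + ((c *\<^sub>R x) \<bullet> S v0) *\<^sub>R e"
          by (simp only: R_def)
        also have "\<dots> = c *\<^sub>R R' (x - (x \<bullet> S v0) *\<^sub>R v0) + (c * (x \<bullet> S v0)) *\<^sub>R e"
          by (subst eq, subst linear_scale[OF R'(1)], simp add: inner_scaleR_left)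
        also have "\<dots> = c *\<^sub>R R x" by (simp add: R_def algebra_simps)
        finally show "R (c *\<^sub>R x) = c *\<^sub>R R x" .
      qed
      show ?thesis
      proof (intro exI[of _ R] conjI ballI linR)
        fix x assume xV: "x \<in> V"
        define c where "c = x \<bullet> S v0"
        define x' where "x' = x - c *\<^sub>R v0"
        have x'V: "x' \<in> V'"
          unfolding V'_def x'_def c_def using xV v0V V Sv0
          by (auto simp: subspace_diff subspace_scale inner_diff_left)
        have "(norm (R x))\<^sup>2 = (norm (R' x'))\<^sup>2 + c\<^sup>2"
          unfolding R_def x'_def[symmetric] c_def[symmetric]
          using eo[OF x'V] ne pyth[of "R' x'" "c *\<^sub>R e"]
          by (simp add: inner_commute)
        also have "\<dots> = x' \<bullet> S x' + c\<^sup>2" using R'(2)[OF x'V] by simp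
        also have "\<dots> = x \<bullet> S x"
          unfolding x'_def using Sv0 sym[of x v0]
          by (simp add: linear_diff[OF lin] linear_scale[OF lin] inner_diff_left inner_diff_right c_def power2_eq_square algebra_simps)
        finally show "(norm (R x))\<^sup>2 = x \<bullet> S x" .
      qed
    qed
  qed
qed

lemma form_sqrt:
  fixes S :: "'a::euclidean_space \<Rightarrow> 'a"
  assumes lin: "linear S" and sym: "\<And>x y. x \<bullet> S y = y \<bullet> S x"
    and pos: "\<And>x. x \<noteq> 0 \<Longrightarrow> x \<bullet> S x > 0"
  obtains R :: "'a \<Rightarrow> 'a" where "linear R" "\<And>x. (norm (R x))\<^sup>2 = x \<bullet> S x"
  using form_sqrt_aux[OF assms, of "DIM('a)"] dim_subset_UNIV[of "UNIV::'a set"]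
  by (metis subspace_UNIV UNIV_I)


lemma scalar_in:
  fixes X Y2 r eps th :: real
  assumes "eps \<ge> 0" "th \<ge> 0" "\<bar>X\<bar> \<le> 1" "Y2 < r\<^sup>2 - X\<^sup>2"
    and "(1+th)*(1+eps)*r\<^sup>2 \<le> 1 - 8*eps"
  shows "(1+th)*(1+eps)*Y2 < (1+X)*(1-X*(1+2*eps)) - eps*(1+X)\<^sup>2"
proof -
  have c1: "(1+th)*(1+eps) \<ge> 1" using assms by (simp add: mult_mono' order_trans[OF _ mult_right_mono[of 1 "1+th" "1+eps"]])
  have "(1+th)*(1+eps)*Y2 < (1+th)*(1+eps)*(r\<^sup>2 - X\<^sup>2)"
    using assms(4) c1 by (intro mult_strict_left_mono) auto
  also have "\<dots> = (1+th)*(1+eps)*r\<^sup>2 - (1+th)*(1+eps)*X\<^sup>2" by (simp add: algebra_simps)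
  also have "\<dots> \<le> 1 - 8*eps - X\<^sup>2"
    using assms(5) mult_right_mono[OF c1, of "X\<^sup>2"] by simp
  also have "\<dots> \<le> (1+X)*(1-X*(1+2*eps)) - eps*(1+X)\<^sup>2"
  proof -
    have "X\<^sup>2 \<le> 1" using assms(3) by (simp add: abs_square_le_1)
    have "eps * X \<le> eps" "- eps \<le> eps * X" using assms(1,3) mult_left_mono[of X 1 eps] mult_left_mono[of "-X" 1 eps]
      by (auto simp: abs_le_iff)
    moreover have "eps * X\<^sup>2 \<le> eps" using \<open>X\<^sup>2 \<le> 1\<close> assms(1) mult_left_mono[of "X\<^sup>2" 1 eps] by simp
    ultimately show ?thesis by (simp add: power2_eq_square algebra_simps)
  qed
  finally show ?thesis .
qed

lemma sc_L1: fixes u d eps :: real shows "u > 0 \<Longrightarrow> d > 0 \<Longrightarrow> eps \<ge> 0 \<Longrightarrow>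
   (2*(1+eps)/u)\<^sup>2/(4*(1+eps)/d) = d*(1+eps)/u\<^sup>2"
proof -
  assume a: "u > 0" "d > 0" "eps \<ge> 0"
  have "(2*(1+eps)/u)\<^sup>2 = (4*(1+eps)) * ((1+eps)/u\<^sup>2)" by (simp add: power_divide power2_eq_square algebra_simps add_divide_distrib[symmetric])
  moreover have "4*(1+eps) \<noteq> 0" using a by simp
  ultimately show ?thesis using a by simp
qed

lemma sc_L2: fixes u d eps th Y2 X :: real shows "u > 0 \<Longrightarrow> d > 0 \<Longrightarrow>
   (1+th)*(d*(1+eps)/u\<^sup>2*Y2) + (eps/d)*(d*((1+X)/u))\<^sup>2 = d/u\<^sup>2*((1+th)*(1+eps)*Y2 + eps*(1+X)\<^sup>2)"
  by (simp add: field_simps power2_eq_square)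

lemma sc_L3: fixes u d X :: real shows "u > 0 \<Longrightarrow> d/u\<^sup>2 * ((1+X)*u) = d*((1+X)/u)"
  by (simp add: field_simps power2_eq_square)

lemma proj_squeeze:
  fixes D :: "'a::euclidean_space set" and q nu e :: 'a and R :: "'a \<Rightarrow> 'a"
  assumes nu: "norm nu = 1" and linR: "linear R" and injR: "\<And>w. R w = 0 \<Longrightarrow> w = 0"
    and eR: "e = R nu" "norm e = 1" and orth: "\<And>w. w \<bullet> nu = 0 \<Longrightarrow> R w \<bullet> e = 0"
    and d: "d > 0" and eps: "eps \<ge> 0" and th: "th \<ge> 0" and r: "0 < r" "r * (1 + 2*eps) \<le> 1"
    and rr: "(1+th)*(1+eps)*r\<^sup>2 \<le> 1 - 8*eps"
    and Out: "\<And>x. x \<in> D \<Longrightarrow> nu \<bullet> (x - q) > 0 \<and>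
               (norm (R ((x - q) - (nu \<bullet> (x - q)) *\<^sub>R nu)))\<^sup>2 < nu \<bullet> (x - q) + (eps/d) * (nu \<bullet> (x - q))\<^sup>2"
    and In: "\<And>x. nu \<bullet> (x - q) > (1+th) * (norm (R ((x - q) - (nu \<bullet> (x - q)) *\<^sub>R nu)))\<^sup>2 + (eps/d) * (nu \<bullet> (x - q))\<^sup>2
               \<Longrightarrow> x \<in> D"
  shows "r \<in> squeeze_radii D (q + d *\<^sub>R nu)"
proof -
  define k where "k = sqrt (1 + eps)"
  define c where "c = 2 * k / sqrt d"
  have k: "k > 0" "k\<^sup>2 = 1 + eps" using eps by (auto simp: k_def)
  have c2: "c\<^sup>2 = 4 * (1 + eps) / d" using k d by (simp add: c_def power_divide power_mult_distrib)
  have cpos: "c > 0" using k d by (simp add: c_def)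
  define S where "S x = nu \<bullet> x" for x
  define W where "W x = x - (nu \<bullet> x) *\<^sub>R nu" for x
  define f where "f = (\<lambda>pr::real \<times> 'a. ((S (snd pr - fst pr *\<^sub>R q) / d) * (1 + 2*eps) + fst pr,
        (S (snd pr - fst pr *\<^sub>R q) / d - fst pr) *\<^sub>R e + c *\<^sub>R R (W (snd pr - fst pr *\<^sub>R q))))"
  have nunu: "nu \<bullet> nu = 1" using nu by (simp add: norm_eq_1)
  have Wnu: "W x \<bullet> nu = 0" for x by (simp add: W_def inner_diff_left inner_diff_right nunu inner_commute)
  have linW: "linear W"
    unfolding W_def by (rule linearI) (simp_all add: inner_add_right algebra_simps)
  define F where "F u = ((S u / d) * (1 + 2*eps), (S u / d) *\<^sub>R e + c *\<^sub>R R (W u))" for u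
  define G where "G pr = snd pr - fst pr *\<^sub>R q" for pr :: "real \<times> 'a"
  define K where "K pr = (fst pr, - fst pr *\<^sub>R e)" for pr :: "real \<times> 'a"
  have feq: "f = (\<lambda>pr. F (G pr) + K pr)"
    unfolding f_def F_def G_def K_def by (auto simp: algebra_simps)
  have linF: "linear F"
    unfolding F_def
    by (rule linearI) (simp_all add: S_def inner_add_right linear_add[OF linW] linear_add[OF linR]
          linear_scale[OF linW] linear_scale[OF linR] add_divide_distrib algebra_simps)
  have linG: "linear G"
    unfolding G_def by (rule linearI) (simp_all add: algebra_simps)
  have linK: "linear K"
    unfolding K_def by (rule linearI) (simp_all add: algebra_simps)
  have linf: "linear f"
    unfolding feq using linear_compose[OF linG linF] linK
    by (simp add: o_def linear_compose_add)
  have f0: "pr = 0" if "f pr = 0" for pr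
  proof -
    obtain t x where pr: "pr = (t, x)" by (cases pr)
    define h where "h = x - t *\<^sub>R q"
    have e1: "(S h / d) * (1 + 2*eps) + t = 0" and
         e2: "(S h / d - t) *\<^sub>R e + c *\<^sub>R R (W h) = 0"
      using that unfolding f_def pr h_def by (auto simp: zero_prod_def)
    have "R (W h) \<bullet> e = 0" by (rule orth[OF Wnu])
    then have "0 = ((S h / d - t) *\<^sub>R e + c *\<^sub>R R (W h)) \<bullet> e" using e2 by simp
    also have "\<dots> = S h / d - t" using \<open>R (W h) \<bullet> e = 0\<close> eR(2)
      by (simp add: inner_add_left inner_scaleR_left norm_eq_1[symmetric])
    finally have st: "S h / d = t" by simp
    have "t * (2 + 2*eps) = 0" using e1 unfolding st by (simp add: algebra_simps)
    then have "t = 0" using eps by simp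
    then have "S h = 0" using st d by simp
    have "R (W h) = 0" using e2 st cpos by simp
    then have "W h = 0" by (rule injR)
    then have "h = 0" using \<open>S h = 0\<close> by (simp add: W_def S_def)
    then show ?thesis using \<open>t = 0\<close> pr h_def by (simp add: zero_prod_def)
  qed
  have injf: "inj f"
    using f0 linf by (simp add: linear_inj_iff_eq_0)
  have bijf: "bij f"
    using linear_inj_imp_surj[OF linf injf] injf by (simp add: bij_def)
  have plf: "proj_lin f" unfolding proj_lin_def using linf bijf by simp
  have fst1: "fst (f (1, x)) = (S (x - q) / d) * (1 + 2*eps) + 1" for x
    unfolding f_def by simp
  have pm: "proj_map f x = inverse ((S (x - q) / d) * (1 + 2*eps) + 1) *\<^sub>R
              ((S (x - q) / d - 1) *\<^sub>R e + c *\<^sub>R R (W (x - q)))" for x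
    unfolding proj_map_def f_def by simp
  have normsq: "(norm ((a::real) *\<^sub>R e + c *\<^sub>R R (W h)))\<^sup>2 = a\<^sup>2 + c\<^sup>2 * (norm (R (W h)))\<^sup>2" for a h
  proof -
    have "(a *\<^sub>R e) \<bullet> (c *\<^sub>R R (W h)) = 0" using orth[OF Wnu[of h]] by (simp add: inner_commute)
    then show ?thesis using pyth[of "a *\<^sub>R e" "c *\<^sub>R R (W h)"] eR(2)
      by (simp add: power_mult_distrib)
  qed
  have pdef: "proj_defined_on f D"
    unfolding proj_defined_on_def
  proof
    fix x assume "x \<in> D"
    then have "S (x - q) > 0" using Out S_def by auto
    then show "fst (f (1, x)) \<noteq> 0" unfolding fst1 using d eps
      by (smt (verit) divide_pos_pos mult_pos_pos)
  qed
  have z0: "proj_map f (q + d *\<^sub>R nu) = 0"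
    unfolding pm using d by (simp add: S_def W_def nunu linear_0[OF linR])
  have sub1: "proj_map f ` D \<subseteq> ball 0 1"
  proof
    fix y assume "y \<in> proj_map f ` D"
    then obtain x where x: "x \<in> D" "y = proj_map f x" by auto
    define s where "s = S (x - q)"
    define sg where "sg = s / d"
    define T where "T = sg * (1 + 2*eps) + 1"
    have s: "s > 0" "(norm (R (W (x - q))))\<^sup>2 < s + (eps/d) * s\<^sup>2"
      using Out[OF x(1)] by (auto simp: s_def S_def W_def)
    have sg: "sg > 0" using s d by (simp add: sg_def)
    have T: "T > 0" using sg eps unfolding T_def by (smt (verit) mult_nonneg_nonneg)
    have "c\<^sup>2 * (norm (R (W (x - q))))\<^sup>2 < c\<^sup>2 * (s + (eps/d) * s\<^sup>2)"
      using s(2) cpos by simp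
    also have "\<dots> = 4 * (1 + eps) * (sg + eps * sg\<^sup>2)"
      unfolding c2 sg_def using d by (simp add: field_simps power2_eq_square)
    also have "\<dots> = T\<^sup>2 - (sg - 1)\<^sup>2"
      unfolding T_def by (simp add: power2_eq_square algebra_simps)
    finally have "(norm ((sg - 1) *\<^sub>R e + c *\<^sub>R R (W (x - q))))\<^sup>2 < T\<^sup>2"
      unfolding normsq by simp
    then have "norm ((sg - 1) *\<^sub>R e + c *\<^sub>R R (W (x - q))) < T"
      using T by (smt (verit) power_mono norm_ge_zero)
    then have "norm y < 1"
      using T unfolding x(2) pm s_def[symmetric] sg_def[symmetric] T_def[symmetric]
      by (simp add: divide_simps)
    then show "y \<in> ball 0 1" by simp
  qed
  have surjR: "surj R"
    using linear_inj_imp_surj[OF linR] injR linR by (simp add: linear_inj_iff_eq_0)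
  have sub2: "ball 0 r \<subseteq> proj_map f ` D"
  proof
    fix P :: 'a assume "P \<in> ball 0 r"
    then have P: "norm P < r" by simp
    define X where "X = P \<bullet> e"
    define Y where "Y = P - X *\<^sub>R e"
    have ee: "e \<bullet> e = 1" using eR(2) by (simp add: norm_eq_1)
    have Ye: "Y \<bullet> e = 0" unfolding Y_def X_def using ee by (simp add: inner_diff_left)
    have PXY: "P = X *\<^sub>R e + Y" unfolding Y_def by simp
    have nP: "(norm P)\<^sup>2 = X\<^sup>2 + (norm Y)\<^sup>2"
      using pyth[of "X *\<^sub>R e" Y] Ye eR(2) unfolding PXY by (simp add: inner_commute power_mult_distrib)
    have X: "\<bar>X\<bar> < r" using nP P
      by (smt (verit) norm_ge_zero power_mono real_sqrt_abs real_sqrt_le_mono zero_le_power2 abs_le_square_iff)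
    have "0 \<le> eps * (r * 2)" using r eps by simp
    then have r1: "r \<le> 1" using r(2) by (simp add: algebra_simps)
    define cc where "cc = 1 + 2*eps"
    have den: "1 - X * cc > 0"
    proof -
      have "X * cc \<le> \<bar>X\<bar> * cc" using eps by (simp add: cc_def mult_right_mono)
      also have "\<dots> < r * cc" using X eps by (simp add: cc_def)
      finally show ?thesis using r(2) cc_def by simp
    qed
    define sg where "sg = (1 + X) / (1 - X * cc)"
    have sg: "sg > 0" using X r1 den by (simp add: sg_def)
    define T where "T = sg * cc + 1"
    have T: "T > 0" using sg eps by (simp add: T_def cc_def) (smt (verit) mult_nonneg_nonneg)
    have TX: "sg - 1 = X * T" unfolding T_def sg_def using den by (simp add: field_simps)
    have Tval: "T = 2 * (1 + eps) / (1 - X * cc)" unfolding T_def sg_def using den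
      by (simp add: field_simps cc_def)
    obtain w0 where w0: "R w0 = (T / c) *\<^sub>R Y" using surjR by (metis surjD)
    define w where "w = W w0"
    have "R w = R w0 - (nu \<bullet> w0) *\<^sub>R e"
      unfolding w_def W_def eR(1) by (simp add: linear_diff[OF linR] linear_scale[OF linR])
    moreover have "R w \<bullet> e = 0" using orth[OF Wnu] w_def by simp
    ultimately have "(nu \<bullet> w0) = 0" using w0 Ye ee by (simp add: inner_diff_left)
    then have Rw: "R w = (T / c) *\<^sub>R Y" using \<open>R w = _\<close> w0 by simp
    have wnu: "w \<bullet> nu = 0" unfolding w_def by (rule Wnu)
    define x where "x = q + (d * sg) *\<^sub>R nu + w"
    have Sx: "S (x - q) = d * sg" unfolding x_def S_def using wnu nunu
      by (simp add: inner_add_right inner_commute)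
    have Wx: "W (x - q) = w" unfolding x_def W_def using wnu nunu
      by (simp add: inner_add_right inner_commute)
    have "proj_map f x = inverse T *\<^sub>R ((sg - 1) *\<^sub>R e + c *\<^sub>R ((T / c) *\<^sub>R Y))"
      unfolding pm Sx Wx Rw T_def cc_def using d by simp
    also have "\<dots> = P" using T cpos unfolding TX PXY by (simp add: algebra_simps)
    finally have xP: "proj_map f x = P" .
    have "x \<in> D"
    proof (rule In)
      have "(norm P)\<^sup>2 < r\<^sup>2" using P by (simp add: power_strict_mono)
      then have Y2: "(norm Y)\<^sup>2 < r\<^sup>2 - X\<^sup>2" using nP by linarith
      have key: "(1+th)*(1+eps)*(norm Y)\<^sup>2 < (1+X)*(1-X*cc) - eps*(1+X)\<^sup>2"
        unfolding cc_def by (rule scalar_in[OF eps th _ Y2 rr]) (use X r1 in auto)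
      have nRw: "(norm (R w))\<^sup>2 = (T / c)\<^sup>2 * (norm Y)\<^sup>2" unfolding Rw by (simp add: power_mult_distrib power_divide)
      have Tc: "(T / c)\<^sup>2 = d * (1 + eps) / (1 - X * cc)\<^sup>2"
      proof -
        have "(T/c)\<^sup>2 = T\<^sup>2/c\<^sup>2" by (simp add: power_divide)
        also have "\<dots> = (2*(1+eps)/(1-X*cc))\<^sup>2 / (4*(1+eps)/d)" by (simp only: Tval c2)
        also have "\<dots> = d * (1 + eps) / (1 - X * cc)\<^sup>2" by (rule sc_L1[OF den d eps])
        finally show ?thesis .
      qed
      have "(1+th) * (norm (R w))\<^sup>2 + (eps/d) * (d * sg)\<^sup>2
            = d / (1 - X * cc)\<^sup>2 * ((1+th)*(1+eps)*(norm Y)\<^sup>2 + eps * (1+X)\<^sup>2)"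
        unfolding nRw Tc sg_def using sc_L2[OF den d] by simp
      also have "\<dots> < d / (1 - X * cc)\<^sup>2 * ((1+X)*(1-X*cc))"
        using key d den by (intro mult_strict_left_mono) auto
      also have "\<dots> = d * sg" unfolding sg_def using sc_L3[OF den] by simp
      finally show "nu \<bullet> (x - q) > (1+th) * (norm (R ((x - q) - (nu \<bullet> (x - q)) *\<^sub>R nu)))\<^sup>2 + (eps/d) * (nu \<bullet> (x - q))\<^sup>2"
        using Sx Wx unfolding S_def W_def by simp
    qed
    then show "P \<in> proj_map f ` D" using xP by blast
  qed
  show ?thesis
    unfolding squeeze_radii_def using r(1) plf pdef z0 sub1 sub2 by blast
qed


lemma taylor2:
  fixes rho :: "'a::euclidean_space \<Rightarrow> real" and g :: "'a \<Rightarrow> 'a" and H :: "'a \<Rightarrow> 'a \<Rightarrow>\<^sub>L 'a"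
  assumes S: "convex S"
    and dr: "\<And>x. x\<in>S \<Longrightarrow> (rho has_derivative (\<lambda>v. g x \<bullet> v)) (at x)"
    and dg: "\<And>x. x\<in>S \<Longrightarrow> (g has_derivative blinfun_apply (H x)) (at x)"
    and Hb: "\<And>x. x\<in>S \<Longrightarrow> norm (H x - H q) \<le> om"
    and q: "q \<in> S" and qh: "q + h \<in> S"
  shows "\<bar>rho (q + h) - rho q - g q \<bullet> h - (h \<bullet> H q h) / 2\<bar> \<le> om * (norm h)\<^sup>2"
proof -
  have seg: "q + t *\<^sub>R h \<in> S" if "0 \<le> t" "t \<le> 1" for t
  proof -
    have "(1 - t) *\<^sub>R q + t *\<^sub>R (q + h) \<in> S"
      using convexD[OF S q qh, of "1 - t" t] that by simp
    moreover have "(1 - t) *\<^sub>R q + t *\<^sub>R (q + h) = q + t *\<^sub>R h" by (simp add: algebra_simps)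
    ultimately show ?thesis by simp
  qed
  define c where "c = h \<bullet> H q h"
  define psi where "psi t = g (q + t *\<^sub>R h) \<bullet> h - g q \<bullet> h - t * c" for t
  define phi where "phi t = rho (q + t *\<^sub>R h) - t * (g q \<bullet> h) - t\<^sup>2 / 2 * c" for t
  have Dphi: "(phi has_field_derivative psi t) (at t)" if "0 \<le> t" "t \<le> 1" for t
  proof -
    have "((\<lambda>t. rho (q + t *\<^sub>R h)) has_derivative (\<lambda>s. g (q + t *\<^sub>R h) \<bullet> (s *\<^sub>R h))) (at t)"
      by (rule has_derivative_compose[where f="\<lambda>t. q + t *\<^sub>R h" and x=t, OF _ dr[OF seg[OF that]]]) (auto intro!: derivative_eq_intros)
    then have "((\<lambda>t. rho (q + t *\<^sub>R h)) has_field_derivative (g (q + t *\<^sub>R h) \<bullet> h)) (at t)"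
      unfolding has_field_derivative_def
      by (rule has_derivative_eq_rhs) (auto simp: fun_eq_iff)
    then show ?thesis unfolding phi_def psi_def
      by (auto intro!: derivative_eq_intros)
  qed
  have Dpsi: "(psi has_field_derivative ((H (q + t *\<^sub>R h) h) \<bullet> h - c)) (at t)" if "0 \<le> t" "t \<le> 1" for t
  proof -
    have "((\<lambda>t. g (q + t *\<^sub>R h)) has_derivative (\<lambda>s. H (q + t *\<^sub>R h) (s *\<^sub>R h))) (at t)"
      by (rule has_derivative_compose[where f="\<lambda>t. q + t *\<^sub>R h" and x=t, OF _ dg[OF seg[OF that]]]) (auto intro!: derivative_eq_intros)
    then have "((\<lambda>t. g (q + t *\<^sub>R h) \<bullet> h) has_derivative (\<lambda>s. H (q + t *\<^sub>R h) (s *\<^sub>R h) \<bullet> h)) (at t)"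
      by (auto intro!: derivative_eq_intros)
    then have "((\<lambda>t. g (q + t *\<^sub>R h) \<bullet> h) has_field_derivative (H (q + t *\<^sub>R h) h \<bullet> h)) (at t)"
      unfolding has_field_derivative_def
      by (rule has_derivative_eq_rhs) (auto simp: fun_eq_iff blinfun.scaleR_right)
    then show ?thesis unfolding psi_def
      by (auto intro!: derivative_eq_intros)
  qed
  have bnd: "\<bar>(H (q + t *\<^sub>R h) h) \<bullet> h - c\<bar> \<le> om * (norm h)\<^sup>2" if "0 \<le> t" "t \<le> 1" for t
  proof -
    have "(H (q + t *\<^sub>R h) h) \<bullet> h - c = ((H (q + t *\<^sub>R h) - H q) h) \<bullet> h"
      unfolding c_def by (simp add: blinfun.diff_left inner_diff_left inner_diff_right inner_commute)
    also have "\<bar>\<dots>\<bar> \<le> norm ((H (q + t *\<^sub>R h) - H q) h) * norm h"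
      by (rule Cauchy_Schwarz_ineq2)
    also have "\<dots> \<le> (norm (H (q + t *\<^sub>R h) - H q) * norm h) * norm h"
      by (intro mult_right_mono norm_blinfun) auto
    also have "\<dots> \<le> (om * norm h) * norm h"
      by (intro mult_right_mono Hb seg that) auto
    finally show ?thesis by (simp add: power2_eq_square mult.assoc)
  qed
  have psib: "\<bar>psi t\<bar> \<le> om * (norm h)\<^sup>2" if "0 \<le> t" "t \<le> 1" for t
  proof (cases "t = 0")
    case True
    then have "psi t = 0" by (simp add: psi_def)
    moreover have "om \<ge> 0" using Hb[OF q] norm_ge_zero order_trans by blast
    ultimately show ?thesis by simp
  next
    case False
    then have "0 < t" using that by simp
    from MVT2[OF this, of psi "\<lambda>t. (H (q + t *\<^sub>R h) h) \<bullet> h - c"] Dpsi that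
    obtain z where z: "0 < z" "z < t" "psi t - psi 0 = (t - 0) * ((H (q + z *\<^sub>R h) h) \<bullet> h - c)"
      by auto
    have "psi 0 = 0" by (simp add: psi_def)
    then have "\<bar>psi t\<bar> = t * \<bar>(H (q + z *\<^sub>R h) h) \<bullet> h - c\<bar>" using z that by (simp add: abs_mult)
    also have "\<dots> \<le> 1 * (om * (norm h)\<^sup>2)"
      using bnd[of z] z that by (intro mult_mono) auto
    finally show ?thesis by simp
  qed
  from MVT2[of 0 1 phi psi] Dphi obtain z where z: "0 < z" "z < 1" "phi 1 - phi 0 = (1 - 0) * psi z"
    by auto
  have "phi 1 - phi 0 = rho (q + h) - rho q - g q \<bullet> h - (h \<bullet> H q h) / 2"
    by (simp add: phi_def c_def)
  then show ?thesis using z psib[of z] by simp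
qed


lemma quadb:
  fixes A :: "'a::euclidean_space \<Rightarrow>\<^sub>L 'a"
  shows "\<bar>u \<bullet> A v\<bar> \<le> norm A * norm u * norm v"
proof -
  have "\<bar>u \<bullet> A v\<bar> \<le> norm u * norm (A v)" by (rule Cauchy_Schwarz_ineq2)
  also have "\<dots> \<le> norm u * (norm A * norm v)" by (intro mult_left_mono norm_blinfun) auto
  finally show ?thesis by (simp add: algebra_simps)
qed

lemma quadbM:
  fixes A :: "'a::euclidean_space \<Rightarrow>\<^sub>L 'a"
  assumes "norm A \<le> M"
  shows "\<bar>u \<bullet> A v\<bar> \<le> M * norm u * norm v"
  using quadb[of u A v] assms
  by (smt (verit) mult_right_mono norm_ge_zero zero_le_mult_iff)

lemma expand_quad:
  fixes A :: "'a::euclidean_space \<Rightarrow>\<^sub>L 'a"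
  shows "(s *\<^sub>R nu + w) \<bullet> A (s *\<^sub>R nu + w) = s\<^sup>2 * (nu \<bullet> A nu) + s * (nu \<bullet> A w + w \<bullet> A nu) + w \<bullet> A w"
  by (simp add: blinfun.add_right blinfun.scaleR_right inner_add_left inner_add_right power2_eq_square algebra_simps)

lemma lb_arith:
  fixes X G Q a c A sS wW ms ks cs :: real
  assumes "\<bar>X - G - Q/2\<bar> \<le> sS + wW" "\<bar>a\<bar> \<le> ms" "\<bar>c\<bar> \<le> wW + ks" "Q = a + c + A"
    "cs = ks/2 + ms/2 + sS"
  shows "X \<le> G + (A + 3*wW)/2 + cs" "X \<ge> G + (A - 3*wW)/2 - cs"
proof -
  show "X \<le> G + (A + 3*wW)/2 + cs" using assms unfolding abs_le_iff add_divide_distrib diff_divide_distrib by (elim conjE) linarith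
  show "X \<ge> G + (A - 3*wW)/2 - cs" using assms unfolding abs_le_iff add_divide_distrib diff_divide_distrib by (elim conjE) linarith
qed

locale scp =
  fixes D :: "'a::euclidean_space set" and p :: 'a and U :: "'a set"
    and rho :: "'a \<Rightarrow> real" and g :: "'a \<Rightarrow> 'a" and H :: "'a \<Rightarrow> 'a \<Rightarrow>\<^sub>L 'a"
  assumes openD: "open D" and convD: "convex D" and pfr: "p \<in> frontier D"
    and openU: "open U" and pU: "p \<in> U"
    and drho: "\<And>x. x\<in>U \<Longrightarrow> (rho has_derivative (\<lambda>v. g x \<bullet> v)) (at x)"
    and dg: "\<And>x. x\<in>U \<Longrightarrow> (g has_derivative blinfun_apply (H x)) (at x)"
    and contH: "continuous_on U H" and gnz: "\<And>x. x\<in>U \<Longrightarrow> g x \<noteq> 0"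
    and DU: "D \<inter> U = {x\<in>U. rho x < 0}"
    and posH: "\<And>v. v \<noteq> 0 \<Longrightarrow> g p \<bullet> v = 0 \<Longrightarrow> v \<bullet> H p v > 0"

locale scp_c = scp +
  fixes lam M gp r1 :: real
  assumes lam: "lam > 0" and M: "M \<ge> 0" and gp: "gp > 0" and r1: "r1 > 0" "cball p r1 \<subseteq> U"
    and lamH: "\<And>q w. q \<in> cball p r1 \<Longrightarrow> g q \<bullet> w = 0 \<Longrightarrow> w \<bullet> H q w \<ge> lam * (norm w)\<^sup>2"
    and gb: "\<And>q. q \<in> cball p r1 \<Longrightarrow> gp/2 \<le> norm (g q) \<and> norm (g q) \<le> 2*gp"
    and Mb: "\<And>q. q \<in> cball p r1 \<Longrightarrow> norm (H q) \<le> M"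

locale scp_t = scp_c +
  fixes om r :: real
  assumes om: "om > 0" "om \<le> lam/9" and r: "r > 0" "2*r \<le> r1"
    and Hp: "\<And>x. x \<in> cball p (2*r) \<Longrightarrow> norm (H x - H p) \<le> om/2"
begin

definition "C0 = (M\<^sup>2/om + M)/2 + om"

lemma C0pos: "C0 > 0"
proof -
  have "0 \<le> (M\<^sup>2/om + M)/2" using om M by simp
  then show ?thesis using om unfolding C0_def by linarith
qed

lemma ball2: "cball p (2*r) \<subseteq> cball p r1" using r by auto

lemma ballU: "cball p (2*r) \<subseteq> U" using ball2 r1 by auto

lemma tay:
  assumes "q \<in> cball p (2*r)" "q + h \<in> cball p (2*r)"
  shows "\<bar>rho (q + h) - rho q - g q \<bullet> h - (h \<bullet> H q h) / 2\<bar> \<le> om * (norm h)\<^sup>2"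
proof (rule taylor2[of "cball p (2*r)"])
  show "(rho has_derivative (\<bullet>) (g x)) (at x)" if "x \<in> cball p (2*r)" for x
    using drho ballU that by auto
  show "(g has_derivative blinfun_apply (H x)) (at x)" if "x \<in> cball p (2*r)" for x
    using dg ballU that by auto
  show "norm (H x - H q) \<le> om" if "x \<in> cball p (2*r)" for x
  proof -
    have "norm (H x - H q) \<le> norm (H x - H p) + norm (H q - H p)"
      by (metis norm_diff_triangle_le norm_minus_commute order_refl)
    also have "\<dots> \<le> om/2 + om/2" using Hp[OF that] Hp[OF assms(1)] by simp
    finally show ?thesis by simp
  qed
qed (use assms in auto)

lemma in_ball2:
  assumes "q \<in> cball p r" "norm h \<le> r"
  shows "q \<in> cball p (2*r)" "q + h \<in> cball p (2*r)"
proof -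
  show "q \<in> cball p (2*r)" using assms r by auto
  have "dist p (q + h) \<le> dist p q + norm h"
    by (metis dist_norm dist_triangle add_diff_cancel_left' norm_minus_commute dist_commute)
  then show "q + h \<in> cball p (2*r)" using assms by auto
qed

lemma qU: "q \<in> cball p r \<Longrightarrow> q \<in> U" "q \<in> cball p r \<Longrightarrow> q \<in> cball p r1"
  using r r1 by auto

lemma decomp:
  assumes G: "G \<noteq> 0" and nu: "nu = - (1 / norm G) *\<^sub>R G" and s: "s = nu \<bullet> h" and w: "w = h - s *\<^sub>R nu"
  shows "norm nu = 1" "h = s *\<^sub>R nu + w" "nu \<bullet> w = 0" "G \<bullet> w = 0" "G \<bullet> h = - norm G * s"
    "(norm h)\<^sup>2 = s\<^sup>2 + (norm w)\<^sup>2" "G = - norm G *\<^sub>R nu"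
proof -
  show n1: "norm nu = 1" using G nu by simp
  then have nn: "nu \<bullet> nu = 1" by (simp add: norm_eq_1)
  show "h = s *\<^sub>R nu + w" using w by simp
  show nw: "nu \<bullet> w = 0" using w s nn by (simp add: inner_diff_right)
  show Gnu: "G = - norm G *\<^sub>R nu" using nu G by simp
  show "G \<bullet> w = 0" using nw by (subst Gnu) simp
  show "G \<bullet> h = - norm G * s" using s by (subst Gnu) simp
  have "(norm h)\<^sup>2 = (norm (s *\<^sub>R nu))\<^sup>2 + (norm w)\<^sup>2"
    using pyth[of "s *\<^sub>R nu" w] nw w by simp
  then show "(norm h)\<^sup>2 = s\<^sup>2 + (norm w)\<^sup>2" using n1 by (simp add: power_mult_distrib)
qed

lemma local_bounds:
  assumes q: "q \<in> cball p r" "rho q = 0" and h: "norm h \<le> r"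
    and nu: "nu = - (1 / norm (g q)) *\<^sub>R g q" and s: "s = nu \<bullet> h" and w: "w = h - s *\<^sub>R nu"
  shows "rho (q + h) \<le> - norm (g q) * s + (w \<bullet> H q w + 3 * om * (norm w)\<^sup>2) / 2 + C0 * s\<^sup>2"
    and "rho (q + h) \<ge> - norm (g q) * s + (w \<bullet> H q w - 3 * om * (norm w)\<^sup>2) / 2 - C0 * s\<^sup>2"
proof -
  have G: "g q \<noteq> 0" using gnz qU(1)[OF q(1)] by simp
  note dc = decomp[OF G nu s w]
  have T: "\<bar>rho (q + h) - rho q - g q \<bullet> h - (h \<bullet> H q h) / 2\<bar> \<le> om * (norm h)\<^sup>2"
    using tay in_ball2[OF q(1) h] by blast
  have MH: "norm (H q) \<le> M" using Mb qU(2)[OF q(1)] by simp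
  have hq: "h \<bullet> H q h = s\<^sup>2 * (nu \<bullet> H q nu) + s * (nu \<bullet> H q w + w \<bullet> H q nu) + w \<bullet> H q w"
    using expand_quad[of s nu w "H q"] dc(2) by simp
  have a1: "\<bar>nu \<bullet> H q nu\<bar> \<le> M" using quadbM[OF MH, of nu nu] dc(1) by simp
  have a2: "\<bar>s\<^sup>2 * (nu \<bullet> H q nu)\<bar> \<le> M * s\<^sup>2"
    using mult_right_mono[OF a1, of "s\<^sup>2"] by (simp add: abs_mult mult.commute)
  have a3: "\<bar>nu \<bullet> H q w + w \<bullet> H q nu\<bar> \<le> 2 * M * norm w"
    using quadbM[OF MH, of nu w] quadbM[OF MH, of w nu] dc(1) by simp
  have a4: "\<bar>s * (nu \<bullet> H q w + w \<bullet> H q nu)\<bar> \<le> om * (norm w)\<^sup>2 + (M\<^sup>2/om) * s\<^sup>2"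
  proof -
    have "\<bar>s * (nu \<bullet> H q w + w \<bullet> H q nu)\<bar> \<le> \<bar>s\<bar> * (2 * M * norm w)"
      using a3 by (simp add: abs_mult mult_left_mono)
    also have "\<dots> \<le> om * (norm w)\<^sup>2 + (M\<^sup>2/om) * s\<^sup>2"
    proof -
      have "0 \<le> (om * norm w - M * \<bar>s\<bar>)\<^sup>2 / om" using om by simp
      also have "\<dots> = om * (norm w)\<^sup>2 + (M\<^sup>2/om) * s\<^sup>2 - \<bar>s\<bar> * (2 * M * norm w)"
        using om by (simp add: power2_eq_square field_simps)
      finally show ?thesis by simp
    qed
    finally show ?thesis .
  qed
  have C0e: "C0 * s\<^sup>2 = (M\<^sup>2/om) * s\<^sup>2 / 2 + M * s\<^sup>2 / 2 + om * s\<^sup>2"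
    unfolding C0_def by (simp add: algebra_simps)
  have Te: "om * (norm h)\<^sup>2 = om * s\<^sup>2 + om * (norm w)\<^sup>2" using dc(6) by (simp add: algebra_simps)
  have gh: "g q \<bullet> h = - norm (g q) * s" by (rule dc(5))
  have T': "\<bar>rho (q + h) - (- norm (g q) * s) - (h \<bullet> H q h) / 2\<bar> \<le> om * s\<^sup>2 + om * (norm w)\<^sup>2"
    using T Te gh q(2) by simp
  note L = lb_arith[OF T' a2 a4 hq C0e]
  show "rho (q + h) \<le> - norm (g q) * s + (w \<bullet> H q w + 3 * om * (norm w)\<^sup>2) / 2 + C0 * s\<^sup>2"
    using L(1) by (simp add: mult.assoc)
  show "rho (q + h) \<ge> - norm (g q) * s + (w \<bullet> H q w - 3 * om * (norm w)\<^sup>2) / 2 - C0 * s\<^sup>2"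
    using L(2) by (simp add: mult.assoc)
qed


lemma tay_lower:
  assumes q: "q \<in> cball p r" and h: "norm h \<le> r"
  shows "rho (q + h) \<ge> rho q + g q \<bullet> h - (M/2 + om) * (norm h)\<^sup>2"
proof -
  have T: "\<bar>rho (q + h) - rho q - g q \<bullet> h - (h \<bullet> H q h) / 2\<bar> \<le> om * (norm h)\<^sup>2"
    using tay in_ball2[OF q h] by blast
  have MH: "norm (H q) \<le> M" using Mb qU(2)[OF q] by simp
  have "\<bar>h \<bullet> H q h\<bar> \<le> M * (norm h)\<^sup>2" using quadbM[OF MH, of h h] by (simp add: power2_eq_square mult.assoc)
  then show ?thesis using T unfolding abs_le_iff by (elim conjE) (simp add: algebra_simps add_divide_distrib)
qed

lemma near_D_U:
  assumes q: "q \<in> cball p r" and h: "norm h \<le> r" and "q + h \<in> D"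
  shows "rho (q + h) < 0"
  using DU assms in_ball2[OF q h] ballU by blast

lemma rho_zero:
  assumes q: "q \<in> cball p r" "q \<in> closure D" "q \<notin> D"
  shows "rho q = 0"
proof -
  have "\<not> rho q < 0" using DU q qU(1)[OF q(1)] by blast
  moreover have "\<not> rho q > 0"
  proof
    assume pos: "rho q > 0"
    define K where "K = norm (g q) + M/2 + om"
    have K: "K > 0" unfolding K_def using om M by (simp add: add_nonneg_pos)
    define dl where "dl = min r (min 1 (rho q / (2 * K)))"
    have dl: "dl > 0" using r pos K by (simp add: dl_def)
    obtain y where y: "y \<in> D" "dist y q < dl" using closure_approachable[of q D] q(2) dl by blast
    define h where "h = y - q"
    have nh: "norm h < dl" using y(2) by (simp add: h_def dist_norm)
    have nhr: "norm h \<le> r" "norm h \<le> 1" "norm h \<le> rho q / (2 * K)" using nh by (auto simp: dl_def)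
    have yqh: "y = q + h" by (simp add: h_def)
    have neg: "rho (q + h) < 0" using near_D_U[OF q(1) nhr(1)] y(1) yqh by simp
    have low: "rho (q + h) \<ge> rho q + g q \<bullet> h - (M/2 + om) * (norm h)\<^sup>2" by (rule tay_lower[OF q(1) nhr(1)])
    have "g q \<bullet> h \<ge> - (norm (g q) * norm h)" using Cauchy_Schwarz_ineq2[of "g q" h] by simp
    moreover have "(M/2 + om) * (norm h)\<^sup>2 \<le> (M/2 + om) * norm h"
    proof -
      have "(norm h)\<^sup>2 \<le> norm h" using nhr(2) by (simp add: power2_eq_square mult_left_le_one_le)
      then show ?thesis using M om by (intro mult_left_mono) auto
    qed
    moreover have "K * norm h \<le> rho q / 2" using nhr(3) K by (simp add: field_simps)
    ultimately have "rho (q + h) \<ge> rho q - rho q / 2" using low unfolding K_def by (simp add: algebra_simps)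
    then show False using neg pos by simp
  qed
  ultimately show ?thesis by simp
qed

lemma support:
  assumes q: "q \<in> cball p r" "q \<in> closure D" "q \<notin> D" and x: "x \<in> D"
  shows "g q \<bullet> (x - q) < 0"
proof (rule ccontr)
  assume "\<not> g q \<bullet> (x - q) < 0"
  then have ge: "g q \<bullet> (x - q) \<ge> 0" by simp
  have rq: "rho q = 0" by (rule rho_zero[OF q])
  have G: "g q \<noteq> 0" using gnz qU(1)[OF q(1)] by simp
  obtain tau where tau: "tau > 0" "ball x tau \<subseteq> D" using openD x openE by blast
  define x' where "x' = x + (tau / (2 * norm (g q))) *\<^sub>R g q"
  have "dist x x' < tau" using tau G by (simp add: x'_def dist_norm)
  then have x'D: "x' \<in> D" using tau by auto
  define v where "v = x' - q"
  define gv where "gv = g q \<bullet> v"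
  have "gv = g q \<bullet> (x - q) + tau * norm (g q) / 2"
    unfolding gv_def v_def x'_def using G
    by (simp add: inner_add_right inner_diff_right power2_norm_eq_inner[symmetric] power2_eq_square)
  then have gv: "gv > 0" using ge tau G by (smt (verit) divide_pos_pos mult_pos_pos zero_less_norm_iff)
  have v0: "v \<noteq> 0" using gv by (auto simp: gv_def)
  define K where "K = M/2 + om"
  have K: "K > 0" unfolding K_def using om M by simp
  define t where "t = min 1 (min (r / norm v) (gv / (2 * K * (norm v)\<^sup>2)))"
  have t: "t > 0" "t \<le> 1" using r gv K v0 by (auto simp: t_def)
  have tv: "norm (t *\<^sub>R v) \<le> r"
  proof -
    have "t \<le> r / norm v" by (simp add: t_def)
    then show ?thesis using t v0 by (simp add: field_simps)
  qed
  have tK: "t * K * (norm v)\<^sup>2 \<le> gv / 2"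
  proof -
    have "t \<le> gv / (2 * K * (norm v)\<^sup>2)" by (simp add: t_def)
    then show ?thesis using K v0 by (simp add: field_simps)
  qed
  have yD: "q + t *\<^sub>R v \<in> D"
  proof -
    have "q - t *\<^sub>R (q - x') \<in> interior D"
      using mem_interior_closure_convex_shrink[OF convD _ q(2) t(1) t(2)] x'D openD interior_open by blast
    moreover have "q - t *\<^sub>R (q - x') = q + t *\<^sub>R v" by (simp add: v_def algebra_simps)
    ultimately show ?thesis using openD interior_open by auto
  qed
  have neg: "rho (q + t *\<^sub>R v) < 0" by (rule near_D_U[OF q(1) tv yD])
  have low: "rho (q + t *\<^sub>R v) \<ge> rho q + g q \<bullet> (t *\<^sub>R v) - K * (norm (t *\<^sub>R v))\<^sup>2"
    unfolding K_def by (rule tay_lower[OF q(1) tv])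
  have "g q \<bullet> (t *\<^sub>R v) - K * (norm (t *\<^sub>R v))\<^sup>2 = t * (gv - t * K * (norm v)\<^sup>2)"
    using t by (simp add: gv_def power2_eq_square algebra_simps)
  also have "\<dots> \<ge> t * (gv / 2)" using tK t by (intro mult_left_mono) auto
  finally have "rho (q + t *\<^sub>R v) \<ge> t * (gv / 2)" using low rq by simp
  moreover have "t * (gv / 2) > 0" using t gv by simp
  ultimately show False using neg by simp
qed

definition "Cin = 4 * gp\<^sup>2 * (1 + 2/lam) / r\<^sup>2"
definition "kap = (lam/2) * r\<^sup>2 / (4 * gp + (2 * C0 + lam) * r)"
definition "Cout = M * r\<^sup>2 / (2 * kap\<^sup>2)"

lemma kap_pos: "kap > 0"
  unfolding kap_def using lam r gp C0pos by (simp add: add_pos_pos)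

lemma inner_in:
  assumes q: "q \<in> cball p r" "rho q = 0"
    and nu: "nu = - (1 / norm (g q)) *\<^sub>R g q" and s: "s = nu \<bullet> h" and w: "w = h - s *\<^sub>R nu"
    and C: "C \<ge> C0" "C \<ge> 1" "C \<ge> Cin"
    and ineq: "2 * norm (g q) * s > w \<bullet> H q w + 3 * om * (norm w)\<^sup>2 + 2 * C * s\<^sup>2"
  shows "q + h \<in> D"
proof -
  have G: "g q \<noteq> 0" using gnz qU(1)[OF q(1)] by simp
  note dc = decomp[OF G nu s w]
  define ga where "ga = norm (g q)"
  have ga: "ga > 0" "ga \<le> 2 * gp" using G gb qU(2)[OF q(1)] by (auto simp: ga_def)
  have A: "w \<bullet> H q w \<ge> lam * (norm w)\<^sup>2" using lamH[OF qU(2)[OF q(1)] dc(4)] .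
  have i2: "2 * ga * s > lam * (norm w)\<^sup>2 + 2 * C * s\<^sup>2"
    using ineq A om unfolding ga_def by (smt (verit) mult_nonneg_nonneg zero_le_power2 norm_ge_zero)
  have lw: "lam * (norm w)\<^sup>2 \<ge> 0" using lam by simp
  have Cs: "2 * C * s\<^sup>2 \<ge> 0" using C by simp
  have spos: "s > 0"
  proof -
    have "2 * ga * s > 0" using i2 lw Cs by linarith
    then show ?thesis using ga by (simp add: zero_less_mult_iff)
  qed
  have "C * s\<^sup>2 < ga * s" using i2 lw by simp
  then have sC: "C * s < ga" using spos by (simp add: power2_eq_square)
  then have s1: "s < ga / C" using C by (simp add: field_simps)
  have s2: "s\<^sup>2 \<le> ga\<^sup>2 / C"
  proof -
    have "s\<^sup>2 \<le> (ga / C)\<^sup>2" using s1 spos by (intro power_mono) auto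
    also have "\<dots> = ga\<^sup>2 / C / C" by (simp add: power2_eq_square)
    also have "\<dots> \<le> ga\<^sup>2 / C" using C mult_right_mono[of 1 C "ga\<^sup>2"] by (simp add: divide_le_eq field_simps)
    finally show ?thesis .
  qed
  have w2: "(norm w)\<^sup>2 \<le> 2 * ga\<^sup>2 / (lam * C)"
  proof -
    have "lam * (norm w)\<^sup>2 < 2 * ga * s" using i2 Cs by linarith
    also have "\<dots> \<le> 2 * ga * (ga / C)" using s1 ga by (intro mult_left_mono) auto
    finally have "lam * (norm w)\<^sup>2 < 2 * ga\<^sup>2 / C" by (simp add: power2_eq_square)
    then show ?thesis using lam C by (simp add: field_simps)
  qed
  have "(norm h)\<^sup>2 \<le> ga\<^sup>2 / C + 2 * ga\<^sup>2 / (lam * C)" using dc(6) s2 w2 by simp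
  also have "\<dots> = ga\<^sup>2 * (1 + 2/lam) / C" using lam C by (simp add: field_simps)
  also have "\<dots> \<le> (2*gp)\<^sup>2 * (1 + 2/lam) / C"
    using ga lam C by (intro divide_right_mono mult_right_mono power_mono) auto
  also have "\<dots> \<le> (2*gp)\<^sup>2 * (1 + 2/lam) / Cin"
    using C lam gp r by (intro divide_left_mono) (auto simp: Cin_def intro!: divide_pos_pos mult_pos_pos add_pos_pos)
  also have "\<dots> = r\<^sup>2"
  proof -
    define X where "X = 4 * gp\<^sup>2 * (1 + 2/lam)"
    have "1 + 2/lam > 0" using lam by (simp add: add_pos_pos)
    then have X: "X \<noteq> 0" using gp by (simp add: X_def)
    have "(2*gp)\<^sup>2 * (1 + 2/lam) = X" by (simp add: X_def power_mult_distrib)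
    moreover have "Cin = X / r\<^sup>2" by (simp add: Cin_def X_def)
    ultimately show ?thesis using X r by simp
  qed
  finally have "norm h \<le> r" using r by (simp add: power2_le_iff_abs_le)
  note lb = local_bounds(1)[OF q this nu s w]
  have "rho (q + h) < 0"
  proof -
    have "(w \<bullet> H q w + 3 * om * (norm w)\<^sup>2) / 2 < ga * s - C * s\<^sup>2" using ineq unfolding ga_def by simp
    moreover have "C0 * s\<^sup>2 \<le> C * s\<^sup>2" using C by (simp add: mult_right_mono)
    ultimately show ?thesis using lb unfolding ga_def by linarith
  qed
  then show ?thesis using DU in_ball2[OF q(1) \<open>norm h \<le> r\<close>] ballU by blast
qed

lemma outer_small:
  assumes q: "q \<in> cball p r" "q \<in> closure D" "q \<notin> D" and hD: "q + h \<in> D" and h: "norm h \<le> r"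
    and nu: "nu = - (1 / norm (g q)) *\<^sub>R g q" and s: "s = nu \<bullet> h" and w: "w = h - s *\<^sub>R nu"
  shows "s > 0" "w \<bullet> H q w - 3 * om * (norm w)\<^sup>2 < 2 * norm (g q) * s + 2 * C0 * s\<^sup>2"
proof -
  have G: "g q \<noteq> 0" using gnz qU(1)[OF q(1)] by simp
  note dc = decomp[OF G nu s w]
  have "g q \<bullet> ((q + h) - q) < 0" by (rule support[OF q hD])
  then show "s > 0" using dc(5) G by (simp add: mult_less_0_iff zero_less_mult_iff)
  have rq: "rho q = 0" by (rule rho_zero[OF q])
  have "rho (q + h) < 0" by (rule near_D_U[OF q(1) h hD])
  then show "w \<bullet> H q w - 3 * om * (norm w)\<^sup>2 < 2 * norm (g q) * s + 2 * C0 * s\<^sup>2"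
    using local_bounds(2)[OF q(1) rq h nu s w] by (simp add: diff_divide_distrib)
qed

lemma outer:
  assumes q: "q \<in> cball p r" "q \<in> closure D" "q \<notin> D" and hD: "q + h \<in> D"
    and nu: "nu = - (1 / norm (g q)) *\<^sub>R g q" and s: "s = nu \<bullet> h" and w: "w = h - s *\<^sub>R nu"
    and C: "C \<ge> C0" "C \<ge> Cout"
  shows "s > 0" "w \<bullet> H q w - 3 * om * (norm w)\<^sup>2 < 2 * norm (g q) * s + 2 * C * s\<^sup>2"
proof -
  have G: "g q \<noteq> 0" using gnz qU(1)[OF q(1)] by simp
  note dc = decomp[OF G nu s w]
  define ga where "ga = norm (g q)"
  have ga: "ga > 0" "ga \<le> 2 * gp" using G gb qU(2)[OF q(1)] by (auto simp: ga_def)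
  have "g q \<bullet> ((q + h) - q) < 0" by (rule support[OF q hD])
  then show spos: "s > 0" using dc(5) G by (simp add: mult_less_0_iff zero_less_mult_iff)
  have C0C: "2 * C0 * s\<^sup>2 \<le> 2 * C * s\<^sup>2" using C by (simp add: mult_right_mono)
  show "w \<bullet> H q w - 3 * om * (norm w)\<^sup>2 < 2 * norm (g q) * s + 2 * C * s\<^sup>2"
  proof (cases "norm h \<le> r")
    case True
    then show ?thesis using outer_small(2)[OF q hD True nu s w] C0C by linarith
  next
    case False
    then have hr: "norm h > r" by simp
    define t where "t = r / norm h"
    have nhp: "norm h > 0" using hr r by linarith
    have t: "t > 0" "t < 1" using hr r nhp by (auto simp: t_def divide_less_eq)
    have th: "norm (t *\<^sub>R h) = r" using nhp r by (simp add: t_def)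
    have yD: "q + t *\<^sub>R h \<in> D"
    proof -
      have cI: "q + h \<in> interior D" using hD openD interior_open by auto
      have "q - t *\<^sub>R (q - (q + h)) \<in> interior D"
        by (rule mem_interior_closure_convex_shrink[OF convD cI q(2) t(1)]) (use t in simp)
      then show ?thesis using openD interior_open by (simp add: interior_open[OF openD])
    qed
    define s' where "s' = nu \<bullet> (t *\<^sub>R h)"
    define w' where "w' = t *\<^sub>R h - s' *\<^sub>R nu"
    have s'e: "s' = t * s" using s by (simp add: s'_def)
    have w'e: "w' = t *\<^sub>R w" by (simp add: w'_def w s'e algebra_simps)
    note dc' = decomp[OF G nu s'_def w'_def]
    have sm: "w' \<bullet> H q w' - 3 * om * (norm w')\<^sup>2 < 2 * ga * s' + 2 * C0 * s'\<^sup>2"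
      using outer_small(2)[OF q yD _ nu s'_def w'_def] th unfolding ga_def by simp
    have s'pos: "s' > 0" using s'e t spos by simp
    have A': "w' \<bullet> H q w' \<ge> lam * (norm w')\<^sup>2" using lamH[OF qU(2)[OF q(1)] dc'(4)] .
    have nw': "(norm w')\<^sup>2 = r\<^sup>2 - s'\<^sup>2" using dc'(6) th by simp
    have s'r: "s' \<le> r"
    proof -
      have "s'\<^sup>2 \<le> r\<^sup>2" using nw' by (smt (verit) zero_le_power2)
      then show ?thesis using r s'pos by (simp add: power2_le_iff_abs_le)
    qed
    have "(lam/2) * (r\<^sup>2 - s'\<^sup>2) \<le> (lam - 3 * om) * (norm w')\<^sup>2"
      unfolding nw'[symmetric] using om by (intro mult_right_mono) auto
    also have "\<dots> < 2 * ga * s' + 2 * C0 * s'\<^sup>2" using sm A' by (simp add: algebra_simps)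
    finally have "(lam/2) * r\<^sup>2 < 2 * ga * s' + (2 * C0 + lam/2) * s'\<^sup>2" by (simp add: algebra_simps)
    also have "\<dots> \<le> s' * (4 * gp + (2 * C0 + lam) * r)"
    proof -
      have "2 * ga * s' \<le> 4 * gp * s'" using ga s'pos by simp
      moreover have "(2 * C0 + lam/2) * s'\<^sup>2 \<le> ((2 * C0 + lam) * r) * s'"
      proof -
        have "(2 * C0 + lam/2) * s'\<^sup>2 = ((2 * C0 + lam/2) * s') * s'" by (simp add: power2_eq_square)
        also have "\<dots> \<le> ((2 * C0 + lam) * r) * s'"
          using s'r s'pos C0pos lam by (intro mult_right_mono mult_mono) auto
        finally show ?thesis .
      qed
      ultimately show ?thesis by (simp add: algebra_simps)
    qed
    finally have kap: "s' > kap"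
      unfolding kap_def using gp C0pos lam r by (simp add: field_simps add_pos_pos)
    have ss: "s = s' * norm h / r" using s'e t hr r nhp by (simp add: t_def field_simps)
    have sk: "s \<ge> kap * norm h / r" unfolding ss using kap hr r by (intro divide_right_mono mult_right_mono) auto
    have MH: "norm (H q) \<le> M" using Mb qU(2)[OF q(1)] by simp
    have "w \<bullet> H q w - 3 * om * (norm w)\<^sup>2 \<le> M * (norm w)\<^sup>2"
    proof -
      have qa: "\<bar>w \<bullet> H q w\<bar> \<le> M * (norm w)\<^sup>2" using quadbM[OF MH, of w w] by (simp add: power2_eq_square mult.assoc)
      have "om * (norm w)\<^sup>2 \<ge> 0" using om by simp
      then show ?thesis using qa unfolding abs_le_iff by linarith
    qed
    also have "\<dots> \<le> M * (norm h)\<^sup>2" using dc(6) M by (intro mult_left_mono) auto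
    also have "\<dots> = 2 * Cout * (kap * norm h / r)\<^sup>2"
      unfolding Cout_def using kap_pos r by (simp add: field_simps power2_eq_square)
    also have "\<dots> \<le> 2 * C * s\<^sup>2"
    proof -
      have "(kap * norm h / r)\<^sup>2 \<le> s\<^sup>2" using sk kap_pos r by (intro power_mono) auto
      moreover have "Cout \<ge> 0" unfolding Cout_def using M by simp
      ultimately show ?thesis using C by (intro mult_mono mult_left_mono) auto
    qed
    moreover have "2 * norm (g q) * s > 0" using spos G by simp
    ultimately show ?thesis by linarith
  qed
qed
end


lemma build_R:
  fixes A :: "'a::euclidean_space \<Rightarrow>\<^sub>L 'a" and nu :: 'a
  assumes nu: "norm nu = 1" and ga: "ga > 0"
    and posA: "\<And>w. w \<noteq> 0 \<Longrightarrow> nu \<bullet> w = 0 \<Longrightarrow> w \<bullet> A w - c3 * (norm w)\<^sup>2 > 0"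
  obtains R :: "'a \<Rightarrow> 'a" where "linear R" "\<And>w. R w = 0 \<Longrightarrow> w = 0" "norm (R nu) = 1"
    "\<And>w. w \<bullet> nu = 0 \<Longrightarrow> R w \<bullet> R nu = 0"
    "\<And>w. w \<bullet> nu = 0 \<Longrightarrow> (norm (R w))\<^sup>2 = (w \<bullet> A w - c3 * (norm w)\<^sup>2) / (2 * ga)"
proof -
  have nn: "nu \<bullet> nu = 1" using nu by (simp add: norm_eq_1)
  define P where "P x = x - (nu \<bullet> x) *\<^sub>R nu" for x
  have linP: "linear P" unfolding P_def by (rule linearI) (simp_all add: inner_add_right algebra_simps)
  have nuP: "nu \<bullet> P x = 0" for x by (simp add: P_def inner_diff_right nn)
  have PP: "x \<bullet> P y = P x \<bullet> P y" for x y
    by (simp add: P_def inner_diff_left inner_diff_right nn inner_commute algebra_simps)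
  have Pnu: "P nu = 0" by (simp add: P_def nn)
  have Pw: "nu \<bullet> w = 0 \<Longrightarrow> P w = w" for w by (simp add: P_def)
  have linA: "linear (blinfun_apply A)" by (simp add: bounded_linear.linear blinfun.bounded_linear_right)
  define Ad where "Ad = adjoint (blinfun_apply A)"
  have Ad: "x \<bullet> Ad y = A x \<bullet> y" for x y unfolding Ad_def by (rule adjoint_works[OF linA])
  have linAd: "linear Ad" unfolding Ad_def by (rule adjoint_linear[OF linA])
  define Hs where "Hs y = (1/2) *\<^sub>R (A y + Ad y)" for y
  have linHs: "linear Hs" unfolding Hs_def
    by (rule linearI) (simp_all add: blinfun.add_right blinfun.scaleR_right linear_add[OF linAd] linear_scale[OF linAd] algebra_simps)
  have Hsym: "x \<bullet> Hs y = y \<bullet> Hs x" for x y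
    unfolding Hs_def by (simp add: inner_add_right Ad inner_commute algebra_simps)
  have Hsq: "x \<bullet> Hs x = x \<bullet> A x" for x
    unfolding Hs_def by (simp add: inner_add_right Ad inner_commute)
  define S where "S x = (1/(2*ga)) *\<^sub>R (P (Hs (P x)) - c3 *\<^sub>R P x) + (nu \<bullet> x) *\<^sub>R nu" for x
  have linS: "linear S"
  proof (rule linearI)
    fix x y
    have "S (x + y) = (1/(2*ga)) *\<^sub>R ((P (Hs (P x)) + P (Hs (P y))) - c3 *\<^sub>R (P x + P y)) + ((nu \<bullet> x) + (nu \<bullet> y)) *\<^sub>R nu"
      by (simp only: S_def linear_add[OF linP] linear_add[OF linHs] inner_add_right)
    also have "\<dots> = S x + S y" by (simp add: S_def algebra_simps)
    finally show "S (x + y) = S x + S y" .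
  next
    fix c x
    have "S (c *\<^sub>R x) = (1/(2*ga)) *\<^sub>R (c *\<^sub>R P (Hs (P x)) - c3 *\<^sub>R (c *\<^sub>R P x)) + (c * (nu \<bullet> x)) *\<^sub>R nu"
      by (simp only: S_def linear_scale[OF linP] linear_scale[OF linHs] inner_scaleR_right)
    also have "\<dots> = c *\<^sub>R S x" by (simp add: S_def algebra_simps)
    finally show "S (c *\<^sub>R x) = c *\<^sub>R S x" .
  qed
  have PP2: "x \<bullet> P y = P x \<bullet> y" for x y
    by (simp add: P_def inner_diff_left inner_diff_right inner_commute)
  have Pn2: "(norm (P x))\<^sup>2 = x \<bullet> x - (nu \<bullet> x)\<^sup>2" for x
    unfolding power2_norm_eq_inner by (simp add: P_def inner_diff_left inner_diff_right nn inner_commute power2_eq_square)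
  have Sform: "x \<bullet> S y = (1/(2*ga)) * (P x \<bullet> Hs (P y) - c3 * (x \<bullet> y - (nu \<bullet> x) * (nu \<bullet> y))) + (nu \<bullet> x) * (nu \<bullet> y)" for x y
  proof -
    have "x \<bullet> S y = (1/(2*ga)) * (x \<bullet> P (Hs (P y)) - c3 * (x \<bullet> P y)) + (nu \<bullet> y) * (x \<bullet> nu)"
      by (simp only: S_def inner_add_right inner_scaleR_right inner_diff_right)
    also have "x \<bullet> P (Hs (P y)) = P x \<bullet> Hs (P y)" by (rule PP2)
    also have "x \<bullet> P y = x \<bullet> y - (nu \<bullet> x) * (nu \<bullet> y)"
      by (simp add: P_def inner_diff_right inner_commute)
    finally show ?thesis by (simp add: inner_commute)
  qed
  have symS: "x \<bullet> S y = y \<bullet> S x" for x y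
    unfolding Sform using Hsym[of "P x" "P y"] by (simp add: inner_commute)
  have posS: "x \<bullet> S x > 0" if "x \<noteq> 0" for x
  proof (cases "P x = 0")
    case True
    then have "x = (nu \<bullet> x) *\<^sub>R nu" by (simp add: P_def)
    then have nx: "nu \<bullet> x \<noteq> 0" using that by (metis scale_zero_left)
    have z0: "x \<bullet> x - (nu \<bullet> x)\<^sup>2 = 0" using Pn2[of x] True by simp
    have sq: "0 < (nu \<bullet> x) * (nu \<bullet> x)" using nx not_real_square_gt_zero by blast
    show ?thesis unfolding Sform using True sq z0 by (simp add: linear_0[OF linHs] power2_eq_square)
  next
    case False
    have "P x \<bullet> A (P x) - c3 * (x \<bullet> x - (nu \<bullet> x) * (nu \<bullet> x)) > 0" using posA[OF False nuP] unfolding Pn2 by (simp add: power2_eq_square)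
    then have "(1/(2*ga)) * (P x \<bullet> Hs (P x) - c3 * (x \<bullet> x - (nu \<bullet> x) * (nu \<bullet> x))) > 0"
      using ga by (simp add: Hsq Pn2 power2_eq_square)
    moreover have "(nu \<bullet> x) * (nu \<bullet> x) \<ge> 0" by simp
    ultimately show ?thesis unfolding Sform by linarith
  qed
  obtain R :: "'a \<Rightarrow> 'a" where R: "linear R" "\<And>x. (norm (R x))\<^sup>2 = x \<bullet> S x"
    using form_sqrt[OF linS symS posS] by blast
  have pol: "R x \<bullet> R y = x \<bullet> S y" for x y
  proof -
    have "(norm (R (x + y)))\<^sup>2 = (norm (R x))\<^sup>2 + 2 * (R x \<bullet> R y) + (norm (R y))\<^sup>2"
      by (simp add: linear_add[OF R(1)] power2_norm_eq_inner inner_add_left inner_add_right inner_commute)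
    moreover have "(x + y) \<bullet> S (x + y) = x \<bullet> S x + 2 * (x \<bullet> S y) + y \<bullet> S y"
      using symS[of y x] by (simp add: linear_add[OF linS] inner_add_left inner_add_right)
    ultimately show ?thesis using R(2)[of "x + y"] R(2)[of x] R(2)[of y] by simp
  qed
  show ?thesis
  proof (rule that[OF R(1)])
    show "w = 0" if "R w = 0" for w
      using R(2)[of w] posS[of w] that by (cases "w = 0") auto
    show "norm (R nu) = 1"
    proof -
      have "(norm (R nu))\<^sup>2 = 1" unfolding R(2) Sform using Pnu nn linear_0[OF linHs] by (simp add: power2_eq_square)
      then show ?thesis using norm_ge_zero[of "R nu"] by (simp add: power2_eq_1_iff)
    qed
    show "R w \<bullet> R nu = 0" if "w \<bullet> nu = 0" for w
      unfolding pol Sform using Pnu that linear_0[OF linHs] by (simp add: inner_commute)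
    show "(norm (R w))\<^sup>2 = (w \<bullet> A w - c3 * (norm w)\<^sup>2) / (2 * ga)" if "w \<bullet> nu = 0" for w
    proof -
      have "nu \<bullet> w = 0" using that by (simp add: inner_commute)
      then show ?thesis unfolding R(2) Sform using Pw[of w] Hsq[of w]
        by (simp add: power2_norm_eq_inner)
    qed
  qed
qed


context scp_t begin

lemma squeeze_pt:
  assumes z: "z \<in> D" "dist z p \<le> r/2"
    and th: "0 < th" "th \<le> 1" "9 * om \<le> th * lam"
    and C: "C \<ge> C0" "C \<ge> 1" "C \<ge> Cin" "C \<ge> Cout"
    and rr: "0 < rr"
    and ep: "\<And>eps. 0 \<le> eps \<Longrightarrow> eps \<le> eps0 \<Longrightarrow> rr * (1 + 2*eps) \<le> 1 \<and> (1+th)*(1+eps)*rr\<^sup>2 \<le> 1 - 8*eps"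
    and zd: "dist z p \<le> eps0 * gp / (2*C)"
  shows "rr \<in> squeeze_radii D z"
proof -
  have pD: "p \<notin> D" using pfr openD by (simp add: frontier_def interior_open)
  have cl: "closed (- D)" using openD by (simp add: closed_Compl)
  obtain q where q: "q \<in> - D" "\<And>y. y \<in> - D \<Longrightarrow> dist z q \<le> dist z y"
    using distance_attains_inf[OF cl, of z] pD by blast
  define d where "d = dist z q"
  have dp: "d \<le> dist z p" using q(2)[of p] pD by (simp add: d_def)
  have qD: "q \<notin> D" using q(1) by simp
  have d0: "d > 0" using z(1) qD by (auto simp: d_def)
  have bD: "y \<in> D" if "dist z y < d" for y
    using q(2)[of y] that by (auto simp: d_def)
  have qcl: "q \<in> closure D"
    unfolding closure_approachable
  proof (intro allI impI)
    fix e :: real assume e: "e > 0"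
    define m where "m = min (e/2) (d/2)"
    have m: "m > 0" "m < e" "m < d" using e d0 by (auto simp: m_def)
    define y where "y = q + (m/d) *\<^sub>R (z - q)"
    have dn: "norm (z - q) = d" by (simp add: d_def dist_norm)
    have "dist y q = m" using d0 m dn by (simp add: y_def dist_norm)
    moreover have "dist z y = d - m"
    proof -
      have "z - y = (1 - m/d) *\<^sub>R (z - q)" by (simp add: y_def algebra_simps)
      then have "dist z y = \<bar>1 - m/d\<bar> * d" by (simp add: dist_norm d_def)
      also have "\<dots> = d - m" using m d0 by (simp add: field_simps)
      finally show ?thesis .
    qed
    ultimately show "\<exists>y\<in>D. dist y q < e" using bD[of y] m by auto
  qed
  have qb: "q \<in> cball p r"
  proof -
    have "dist p q \<le> dist p z + dist z q" by (rule dist_triangle)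
    also have "\<dots> \<le> 2 * dist z p" using dp by (simp add: d_def dist_commute)
    finally show ?thesis using z(2) by simp
  qed
  have rq: "rho q = 0" by (rule rho_zero[OF qb qcl qD])
  have G: "g q \<noteq> 0" using gnz qU(1)[OF qb] by simp
  define ga where "ga = norm (g q)"
  have ga: "ga > 0" "gp/2 \<le> ga" using G gb qU(2)[OF qb] by (auto simp: ga_def)
  define nu where "nu = - (1 / norm (g q)) *\<^sub>R g q"
  have nu1: "norm nu = 1" using G by (simp add: nu_def)
  have gnu: "g q = - ga *\<^sub>R nu" using G by (simp add: nu_def ga_def)
  have zq: "z = q + d *\<^sub>R nu"
  proof -
    define a where "a = g q \<bullet> (z - q)"
    have lt: "a + tau * ga < 0" if "0 < tau" "tau < d" for tau
    proof -
      define y where "y = z + (tau / ga) *\<^sub>R g q"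
      have "dist z y = tau" using ga that by (simp add: y_def dist_norm ga_def)
      then have "y \<in> D" using bD that by simp
      then have "g q \<bullet> (y - q) < 0" by (rule support[OF qb qcl qD])
      moreover have "g q \<bullet> (y - q) = a + tau * ga"
        using ga by (simp add: y_def a_def inner_add_right inner_diff_right power2_norm_eq_inner[symmetric] ga_def power2_eq_square)
      ultimately show ?thesis by simp
    qed
    have a1: "a \<le> - d * ga"
    proof (rule ccontr)
      assume "\<not> a \<le> - d * ga"
      then have an: "a > - d * ga" by simp
      define tau where "tau = max (d/2) (- a / ga)"
      have "- a / ga < d" using an ga by (simp add: field_simps)
      then have "0 < tau" "tau < d" using d0 by (auto simp: tau_def)
      moreover have "a + tau * ga \<ge> 0"
      proof -
        have "tau * ga \<ge> (- a / ga) * ga" using ga by (intro mult_right_mono) (auto simp: tau_def)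
        then show ?thesis using ga by simp
      qed
      ultimately show False using lt by force
    qed
    have a2: "a \<ge> - d * ga"
    proof -
      have "\<bar>a\<bar> \<le> ga * d" unfolding a_def ga_def d_def
        using Cauchy_Schwarz_ineq2[of "g q" "z - q"] by (simp add: dist_norm)
      then show ?thesis by (simp add: abs_le_iff algebra_simps)
    qed
    have ae: "a = - d * ga" using a1 a2 by simp
    have nzq: "nu \<bullet> (z - q) = d"
    proof -
      have "a = - ga * (nu \<bullet> (z - q))" unfolding a_def by (subst gnu) simp
      then show ?thesis using ae ga by simp
    qed
    have "(norm (z - q - d *\<^sub>R nu))\<^sup>2 = (norm (z - q))\<^sup>2 - 2 * d * (nu \<bullet> (z - q)) + d\<^sup>2"
    proof -
      have nn: "nu \<bullet> nu = 1" using nu1 by (simp add: norm_eq_1)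
      show ?thesis unfolding power2_norm_eq_inner
        by (simp add: inner_diff_left inner_diff_right inner_commute nn power2_eq_square algebra_simps)
    qed
    also have "\<dots> = 0" using nzq by (simp add: d_def dist_norm power2_eq_square)
    finally show ?thesis by (simp add: algebra_simps)
  qed
  have posA: "w \<bullet> H q w - (3 * om) * (norm w)\<^sup>2 > 0" if "w \<noteq> 0" "nu \<bullet> w = 0" for w
  proof -
    have "g q \<bullet> w = 0" using that(2) by (subst gnu) simp
    then have "w \<bullet> H q w \<ge> lam * (norm w)\<^sup>2" using lamH qU(2)[OF qb] by blast
    moreover have "(3 * om) * (norm w)\<^sup>2 < lam * (norm w)\<^sup>2" using om lam that(1) by simp
    ultimately show ?thesis by simp
  qed
  obtain R :: "'a \<Rightarrow> 'a" where R: "linear R" "\<And>w. R w = 0 \<Longrightarrow> w = 0" "norm (R nu) = 1"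
    "\<And>w. w \<bullet> nu = 0 \<Longrightarrow> R w \<bullet> R nu = 0"
    "\<And>w. w \<bullet> nu = 0 \<Longrightarrow> (norm (R w))\<^sup>2 = (w \<bullet> H q w - (3 * om) * (norm w)\<^sup>2) / (2 * ga)"
    using build_R[OF nu1 ga(1) posA] by blast
  define eps where "eps = C * d / ga"
  have Cp: "C > 0" using C by simp
  have eps0: "eps \<ge> 0" using Cp d0 ga by (simp add: eps_def)
  have epsd: "eps / d = C / ga" using d0 by (simp add: eps_def)
  have eps1: "eps \<le> eps0"
  proof -
    have "eps \<le> C * dist z p / ga" unfolding eps_def using Cp ga dp by (intro divide_right_mono mult_left_mono) auto
    also have "\<dots> \<le> C * dist z p / (gp/2)" using Cp ga gp by (intro divide_left_mono mult_nonneg_nonneg) auto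
    also have "\<dots> \<le> C * (eps0 * gp / (2*C)) / (gp/2)" using Cp gp zd by (intro divide_right_mono mult_left_mono) auto
    also have "\<dots> = eps0" using Cp gp by (simp add: field_simps)
    finally show ?thesis .
  qed
  note epc = ep[OF eps0 eps1]
  have "rr \<in> squeeze_radii D (q + d *\<^sub>R nu)"
  proof (rule proj_squeeze[OF nu1 R(1) R(2) refl R(3) R(4) d0 eps0 _ rr _ _])
    show "0 \<le> th" using th by simp
    show "rr * (1 + 2 * eps) \<le> 1" using epc by simp
    show "(1 + th) * (1 + eps) * rr\<^sup>2 \<le> 1 - 8 * eps" using epc by simp
  next
    fix x assume xD: "x \<in> D"
    define s where "s = nu \<bullet> (x - q)"
    define w where "w = (x - q) - s *\<^sub>R nu"
    have hD: "q + (x - q) \<in> D" using xD by simp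
    note o = outer[OF qb qcl qD hD nu_def s_def w_def C(1) C(4)]
    have wnu: "w \<bullet> nu = 0" using decomp(3)[OF G nu_def s_def w_def] by (simp add: inner_commute)
    have "(norm (R w))\<^sup>2 = (w \<bullet> H q w - (3 * om) * (norm w)\<^sup>2) / (2 * ga)" by (rule R(5)[OF wnu])
    also have "\<dots> < (2 * ga * s + 2 * C * s\<^sup>2) / (2 * ga)"
      using o(2) ga unfolding ga_def by (intro divide_strict_right_mono) (auto simp: mult.assoc)
    also have "\<dots> = s + (eps / d) * s\<^sup>2" unfolding epsd using ga by (simp add: field_simps)
    finally show "nu \<bullet> (x - q) > 0 \<and> (norm (R ((x - q) - (nu \<bullet> (x - q)) *\<^sub>R nu)))\<^sup>2 < nu \<bullet> (x - q) + (eps/d) * (nu \<bullet> (x - q))\<^sup>2"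
      using o(1) unfolding s_def w_def by simp
  next
    fix x
    define s where "s = nu \<bullet> (x - q)"
    define w where "w = (x - q) - s *\<^sub>R nu"
    assume "nu \<bullet> (x - q) > (1+th) * (norm (R ((x - q) - (nu \<bullet> (x - q)) *\<^sub>R nu)))\<^sup>2 + (eps/d) * (nu \<bullet> (x - q))\<^sup>2"
    then have hyp: "s > (1+th) * (norm (R w))\<^sup>2 + (C / ga) * s\<^sup>2" unfolding s_def[symmetric] w_def[symmetric] epsd .
    have wnu: "w \<bullet> nu = 0" using decomp(3)[OF G nu_def s_def w_def] by (simp add: inner_commute)
    have gw: "g q \<bullet> w = 0" using decomp(4)[OF G nu_def s_def w_def] .
    define A where "A = w \<bullet> H q w"
    define W2 where "W2 = (norm w)\<^sup>2"
    have A: "A \<ge> lam * W2" using lamH qU(2)[OF qb] gw by (simp add: A_def W2_def)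
    have nR: "(norm (R w))\<^sup>2 = (A - 3 * om * W2) / (2 * ga)" using R(5)[OF wnu] by (simp add: A_def W2_def)
    have "2 * ga * s > (1+th) * (A - 3 * om * W2) + 2 * C * s\<^sup>2"
    proof -
      define X where "X = (1+th) * (A - 3 * om * W2) + 2 * C * s\<^sup>2"
      have "(1+th) * ((A - 3 * om * W2) / (2 * ga)) + (C / ga) * s\<^sup>2 = X / (2 * ga)"
        using ga unfolding X_def by (simp add: field_simps)
      then have "X / (2 * ga) < s" using hyp nR by simp
      then have "X < s * (2 * ga)" using ga by (simp add: pos_divide_less_eq)
      then show ?thesis unfolding X_def by (simp add: algebra_simps)
    qed
    moreover have "(1+th) * (A - 3 * om * W2) \<ge> A + 3 * om * W2"
    proof -
      have W: "W2 \<ge> 0" by (simp add: W2_def)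
      have "th * A \<ge> th * (lam * W2)" using A th by (intro mult_left_mono) auto
      moreover have "th * (lam * W2) \<ge> 9 * om * W2" using th W by (simp add: mult_right_mono mult.assoc[symmetric] mult.commute[of th])
      moreover have "9 * om * W2 \<ge> (6 + 3 * th) * om * W2" using th om W by (intro mult_right_mono) auto
      ultimately show ?thesis by (simp add: algebra_simps)
    qed
    ultimately have "2 * norm (g q) * s > w \<bullet> H q w + 3 * om * (norm w)\<^sup>2 + 2 * C * s\<^sup>2"
      unfolding A_def W2_def ga_def by linarith
    then have "q + (x - q) \<in> D" by (rule inner_in[OF qb rq nu_def s_def w_def C(1) C(2) C(3)])
    then show "x \<in> D" by simp
  qed
  then show ?thesis using zq by simp
qed

end


lemma sc1: fixes eta e :: real assumes "0 < eta" "eta \<le> 1/2" "0 \<le> e" "e \<le> eta/40"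
  shows "(1 - eta) * (1 + 2*e) \<le> 1"
proof -
  have "0 \<le> 2 * e * eta" using assms by simp
  moreover have "2 * e \<le> eta" using assms by linarith
  ultimately show ?thesis by (simp add: algebra_simps)
qed

lemma sc2: fixes eta e :: real assumes a: "0 < eta" "eta \<le> 1/2" "0 \<le> e" "e \<le> eta/40"
  shows "(1 + eta/4) * (1 + e) * (1 - eta)\<^sup>2 \<le> 1 - 8*e"
proof -
  have s1: "(1 - eta)\<^sup>2 \<le> 1 - eta"
  proof -
    have "(1 - eta) * (1 - eta) \<le> (1 - eta) * 1" using a by (intro mult_left_mono) auto
    then show ?thesis by (simp add: power2_eq_square)
  qed
  have "eta * e \<le> eta * (eta/40)" using a by (intro mult_left_mono) auto
  moreover have "eta * eta \<le> eta * (1/2)" using a by (intro mult_left_mono) auto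
  ultimately have ee: "eta * e \<le> eta / 80" by simp
  have "(1 + eta/4) * (1 + e) = 1 + e + eta/4 + (eta * e)/4" by (simp add: algebra_simps)
  then have s2: "(1 + eta/4) * (1 + e) \<le> 1 + 3/10 * eta"
    using a ee by linarith
  have "(1 + eta/4) * (1 + e) * (1 - eta)\<^sup>2 \<le> (1 + 3/10 * eta) * (1 - eta)"
    using s1 s2 a by (intro mult_mono) auto
  also have "\<dots> \<le> 1 - 8*e"
  proof -
    have "0 \<le> eta * eta" by simp
    moreover have "(1 + 3/10 * eta) * (1 - eta) = 1 - 7/10 * eta - 3/10 * (eta * eta)" by (simp add: algebra_simps add_divide_distrib diff_divide_distrib)
    ultimately show ?thesis using a by linarith
  qed
  finally show ?thesis .
qed

lemma radii_le1:
  fixes D :: "'a::euclidean_space set"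
  assumes "rr \<in> squeeze_radii D z"
  shows "rr \<le> 1"
proof (rule ccontr)
  assume "\<not> rr \<le> 1"
  then have r1: "rr > 1" by simp
  from assms obtain f where f: "ball 0 rr \<subseteq> proj_map f ` D" "proj_map f ` D \<subseteq> ball 0 1"
    unfolding squeeze_radii_def by blast
  obtain u :: 'a where u: "u \<in> Basis" using nonempty_Basis by blast
  have nu: "norm u = 1" using u by simp
  define v where "v = ((1 + rr)/2) *\<^sub>R u"
  have "norm v = (1 + rr)/2" using nu r1 by (simp add: v_def)
  then have "v \<in> ball 0 rr" "v \<notin> ball 0 1" using r1 by auto
  then show False using f by blast
qed

lemma squeezing_ge:
  fixes D :: "'a::euclidean_space set"
  assumes "rr \<in> squeeze_radii D z"
  shows "rr \<le> squeezing D z" "squeezing D z \<le> 1"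
proof -
  have ne: "squeeze_radii D z \<noteq> {}" using assms by blast
  have bdd: "bdd_above (squeeze_radii D z)" by (rule bdd_aboveI[where M=1]) (rule radii_le1)
  have eq: "squeezing D z = Sup (squeeze_radii D z)" using ne by (simp add: squeezing_def)
  show "rr \<le> squeezing D z" unfolding eq by (rule cSup_upper[OF assms bdd])
  show "squeezing D z \<le> 1" unfolding eq by (rule cSup_least[OF ne]) (use radii_le1 in blast)
qed

context scp_t begin

lemma final_local:
  assumes eta: "0 < eta" "eta \<le> 1/2" and omth: "9 * om \<le> (eta/4) * lam"
  shows "\<exists>dl>0. \<forall>z\<in>D. dist z p < dl \<longrightarrow> (1 - eta) \<in> squeeze_radii D z"
proof -
  define C where "C = max (max C0 1) (max Cin Cout)"
  have C: "C \<ge> C0" "C \<ge> 1" "C \<ge> Cin" "C \<ge> Cout" by (auto simp: C_def)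
  define eps0 where "eps0 = eta / 40"
  define dl where "dl = min (r/2) (eps0 * gp / (2*C))"
  have dl: "dl > 0" using r eta gp C by (simp add: dl_def eps0_def)
  show ?thesis
  proof (intro exI[of _ dl] conjI dl ballI impI)
    fix z assume z: "z \<in> D" "dist z p < dl"
    show "(1 - eta) \<in> squeeze_radii D z"
    proof (rule squeeze_pt[OF z(1) _ _ _ _ C _ _])
      show "dist z p \<le> r/2" using z by (simp add: dl_def)
      show "0 < eta/4" "eta/4 \<le> 1" "9 * om \<le> eta/4 * lam" using eta omth by auto
      show "0 < 1 - eta" using eta by simp
      show "dist z p \<le> eps0 * gp / (2*C)" using z by (simp add: dl_def)
      fix e :: real assume e: "0 \<le> e" "e \<le> eps0"
      show "(1 - eta) * (1 + 2*e) \<le> 1 \<and> (1 + eta/4)*(1+e)*(1 - eta)\<^sup>2 \<le> 1 - 8*e"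
        using sc1[OF eta e(1)] sc2[OF eta e(1)] e(2) by (simp add: eps0_def)
    qed
  qed
qed

end

context scp begin

lemma lam0_exists:
  obtains lam0 where "lam0 > 0" "\<And>w. g p \<bullet> w = 0 \<Longrightarrow> w \<bullet> H p w \<ge> lam0 * (norm w)\<^sup>2"
proof -
  define S0 where "S0 = sphere (0::'a) 1 \<inter> {v. g p \<bullet> v = 0}"
  define F where "F v = v \<bullet> H p v" for v
  have scale: "F w \<ge> lam0 * (norm w)\<^sup>2" if "w \<noteq> 0" "\<And>u. u \<in> S0 \<Longrightarrow> F u \<ge> lam0" "g p \<bullet> w = 0" for w lam0
  proof -
    define u where "u = (1 / norm w) *\<^sub>R w"
    have "u \<in> S0" using that by (simp add: S0_def u_def)
    then have "F u \<ge> lam0" using that(2) by blast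
    moreover have "F w = (norm w)\<^sup>2 * F u"
      using that(1) by (simp add: F_def u_def blinfun.scaleR_right power2_eq_square)
    ultimately show ?thesis using that(1) by (simp add: mult.commute mult_left_mono)
  qed
  show ?thesis
  proof (cases "S0 = {}")
    case True
    show ?thesis
    proof (rule that[of 1])
      fix w assume w: "g p \<bullet> w = 0"
      show "w \<bullet> H p w \<ge> 1 * (norm w)\<^sup>2"
      proof (cases "w = 0")
        case False
        then show ?thesis using scale[OF False _ w, of 1] True by (simp add: F_def)
      qed simp
    qed simp
  next
    case False
    have cpt: "compact S0" unfolding S0_def by (intro compact_Int_closed compact_sphere closed_hyperplane)
    have cont: "continuous_on S0 F" unfolding F_def by (intro continuous_intros)
    obtain x where x: "x \<in> S0" "\<And>y. y \<in> S0 \<Longrightarrow> F x \<le> F y"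
      using continuous_attains_inf[OF cpt False cont] by blast
    have "x \<noteq> 0" "g p \<bullet> x = 0" using x(1) by (auto simp: S0_def)
    then have pos: "F x > 0" using posH by (simp add: F_def)
    show ?thesis
    proof (rule that[OF pos])
      fix w assume w: "g p \<bullet> w = 0"
      show "w \<bullet> H p w \<ge> F x * (norm w)\<^sup>2"
      proof (cases "w = 0")
        case False
        then show ?thesis using scale[OF False _ w, of "F x"] x(2) by (simp add: F_def)
      qed simp
    qed
  qed
qed

lemma Ktrick:
  assumes lam0: "lam0 > 0" "\<And>w. g p \<bullet> w = 0 \<Longrightarrow> w \<bullet> H p w \<ge> lam0 * (norm w)\<^sup>2"
  defines "Mp \<equiv> norm (H p)" and "gp \<equiv> norm (g p)"
  defines "K \<equiv> (2 * Mp\<^sup>2 / lam0 + Mp + lam0/2) / gp\<^sup>2"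
  shows "v \<bullet> H p v + K * (g p \<bullet> v)\<^sup>2 \<ge> (lam0/2) * (norm v)\<^sup>2"
proof -
  have G: "g p \<noteq> 0" using gnz pU by simp
  have gp: "gp > 0" using G by (simp add: gp_def)
  define nu where "nu = (1 / gp) *\<^sub>R g p"
  have n1: "norm nu = 1" using gp by (simp add: nu_def gp_def)
  have nn: "nu \<bullet> nu = 1" using n1 by (simp add: norm_eq_1)
  define s where "s = nu \<bullet> v"
  define w where "w = v - s *\<^sub>R nu"
  have vsw: "v = s *\<^sub>R nu + w" by (simp add: w_def)
  have nw: "nu \<bullet> w = 0" by (simp add: w_def s_def inner_diff_right nn)
  have gw: "g p \<bullet> w = 0" using nw gp by (simp add: nu_def)
  have gv: "g p \<bullet> v = gp * s" using gp by (simp add: s_def nu_def gp_def)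
  have nv: "(norm v)\<^sup>2 = s\<^sup>2 + (norm w)\<^sup>2"
    using pyth[of "s *\<^sub>R nu" w] nw n1 vsw by (simp add: power_mult_distrib)
  have MH: "norm (H p) \<le> Mp" by (simp add: Mp_def)
  have Mp0: "Mp \<ge> 0" by (simp add: Mp_def)
  have hq: "v \<bullet> H p v = s\<^sup>2 * (nu \<bullet> H p nu) + s * (nu \<bullet> H p w + w \<bullet> H p nu) + w \<bullet> H p w"
    using expand_quad[of s nu w "H p"] vsw by simp
  have a1: "s\<^sup>2 * (nu \<bullet> H p nu) \<ge> - Mp * s\<^sup>2"
  proof -
    have "\<bar>nu \<bullet> H p nu\<bar> \<le> Mp" using quadbM[OF MH, of nu nu] n1 by simp
    then have "\<bar>s\<^sup>2 * (nu \<bullet> H p nu)\<bar> \<le> Mp * s\<^sup>2"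
      using mult_right_mono[of "\<bar>nu \<bullet> H p nu\<bar>" Mp "s\<^sup>2"] by (simp add: abs_mult mult.commute)
    then show ?thesis by (simp add: abs_le_iff)
  qed
  have a3: "\<bar>nu \<bullet> H p w + w \<bullet> H p nu\<bar> \<le> 2 * Mp * norm w"
    using quadbM[OF MH, of nu w] quadbM[OF MH, of w nu] n1 by simp
  have a4: "s * (nu \<bullet> H p w + w \<bullet> H p nu) \<ge> - ((lam0/2) * (norm w)\<^sup>2 + (2 * Mp\<^sup>2 / lam0) * s\<^sup>2)"
  proof -
    have "\<bar>s * (nu \<bullet> H p w + w \<bullet> H p nu)\<bar> \<le> \<bar>s\<bar> * (2 * Mp * norm w)"
      using a3 by (simp add: abs_mult mult_left_mono)
    also have "\<dots> \<le> (lam0/2) * (norm w)\<^sup>2 + (2 * Mp\<^sup>2 / lam0) * s\<^sup>2"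
    proof -
      have "0 \<le> ((lam0/2) * norm w - Mp * \<bar>s\<bar>)\<^sup>2 * (2 / lam0)" using lam0 by simp
      also have "\<dots> = (lam0/2) * (norm w)\<^sup>2 + (2 * Mp\<^sup>2 / lam0) * s\<^sup>2 - \<bar>s\<bar> * (2 * Mp * norm w)"
        using lam0 by (simp add: power2_eq_square field_simps)
      finally show ?thesis by simp
    qed
    finally show ?thesis by (simp add: abs_le_iff)
  qed
  have a5: "w \<bullet> H p w \<ge> lam0 * (norm w)\<^sup>2" using lam0(2)[OF gw] .
  have Kg: "K * (g p \<bullet> v)\<^sup>2 = (2 * Mp\<^sup>2 / lam0) * s\<^sup>2 + Mp * s\<^sup>2 + (lam0/2) * s\<^sup>2"
    unfolding K_def gv using gp by (simp add: power_mult_distrib field_simps)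
  show ?thesis using hq a1 a4 a5 Kg nv by (simp add: algebra_simps)
qed

lemma consts_exist:
  obtains lam M gp r1 where "scp_c D p U rho g H lam M gp r1"
proof -
  obtain lam0 where lam0: "lam0 > 0" "\<And>w. g p \<bullet> w = 0 \<Longrightarrow> w \<bullet> H p w \<ge> lam0 * (norm w)\<^sup>2"
    using lam0_exists by blast
  define Mp where "Mp = norm (H p)"
  define gp where "gp = norm (g p)"
  define K where "K = (2 * Mp\<^sup>2 / lam0 + Mp + lam0/2) / gp\<^sup>2"
  have G: "g p \<noteq> 0" using gnz pU by simp
  have gp: "gp > 0" using G by (simp add: gp_def)
  have Mp0: "Mp \<ge> 0" by (simp add: Mp_def)
  have Kp: "K > 0" unfolding K_def using lam0 gp Mp0 by (intro divide_pos_pos add_nonneg_pos) auto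
  have KT: "v \<bullet> H p v + K * (g p \<bullet> v)\<^sup>2 \<ge> (lam0/2) * (norm v)\<^sup>2" for v
    using Ktrick[OF lam0] unfolding K_def Mp_def gp_def .
  define eg where "eg = min (gp/2) (min 1 (lam0 / (8*K)))"
  have eg: "eg > 0" "eg \<le> gp/2" "eg \<le> 1" "eg \<le> lam0 / (8*K)" using gp lam0 Kp by (auto simp: eg_def)
  have isH: "isCont H p" using contH openU pU continuous_on_eq_continuous_at by blast
  have isg: "isCont g p" using dg[OF pU] has_derivative_continuous by blast
  obtain d0 where d0: "d0 > 0" "ball p d0 \<subseteq> U" using openU pU openE by blast
  obtain d1 where d1: "d1 > 0" "\<And>x. dist x p < d1 \<Longrightarrow> dist (H x) (H p) < lam0/8"
    using isH lam0 unfolding continuous_at_eps_delta by (meson divide_pos_pos zero_less_numeral)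
  obtain d2 where d2: "d2 > 0" "\<And>x. dist x p < d2 \<Longrightarrow> dist (g x) (g p) < eg"
    using isg eg unfolding continuous_at_eps_delta by meson
  define r1 where "r1 = min (d0/2) (min (d1/2) (d2/2))"
  have r1: "r1 > 0" using d0 d1 d2 by (simp add: r1_def)
  have inb: "dist x p < d0" "dist x p < d1" "dist x p < d2" if "x \<in> cball p r1" for x
    using that d0 d1 d2 by (auto simp: r1_def dist_commute)
  show ?thesis
  proof (rule that, intro scp_c.intro scp_axioms scp_c_axioms.intro)
    show "lam0/4 > 0" using lam0 by simp
    show "Mp + lam0/8 \<ge> 0" using Mp0 lam0 by simp
    show "gp > 0" by (rule gp)
    show "r1 > 0" by (rule r1)
    show "cball p r1 \<subseteq> U" using inb d0 by (auto simp: dist_commute)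
    fix q assume q: "q \<in> cball p r1"
    have Hq: "norm (H q - H p) < lam0/8" using d1(2)[OF inb(2)[OF q]] by (simp add: dist_norm)
    have gq: "norm (g q - g p) < eg" using d2(2)[OF inb(3)[OF q]] by (simp add: dist_norm)
    show "norm (H q) \<le> Mp + lam0/8"
      using Hq norm_triangle_ineq2[of "H q" "H p"] unfolding Mp_def by linarith
    show "gp/2 \<le> norm (g q) \<and> norm (g q) \<le> 2*gp"
      using gq eg norm_triangle_ineq2[of "g q" "g p"] norm_triangle_ineq2[of "g p" "g q"]
      unfolding gp_def by (auto simp: norm_minus_commute)
    fix w assume gw: "g q \<bullet> w = 0"
    have e1: "\<bar>w \<bullet> H q w - w \<bullet> H p w\<bar> \<le> (lam0/8) * (norm w)\<^sup>2"
    proof -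
      have "w \<bullet> H q w - w \<bullet> H p w = w \<bullet> (H q - H p) w" by (simp add: blinfun.diff_left inner_diff_right)
      also have "\<bar>\<dots>\<bar> \<le> norm (H q - H p) * norm w * norm w" by (rule quadb)
      also have "\<dots> \<le> (lam0/8) * norm w * norm w" using Hq by (intro mult_right_mono) auto
      finally show ?thesis by (simp add: power2_eq_square mult.assoc)
    qed
    have e2: "K * (g p \<bullet> w)\<^sup>2 \<le> (lam0/8) * (norm w)\<^sup>2"
    proof -
      have "g p \<bullet> w = (g p - g q) \<bullet> w" using gw by (simp add: inner_diff_left)
      then have "\<bar>g p \<bullet> w\<bar> \<le> norm (g q - g p) * norm w"
        using Cauchy_Schwarz_ineq2[of "g p - g q" w] by (simp add: norm_minus_commute)
      also have "\<dots> \<le> eg * norm w" using gq by (intro mult_right_mono) auto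
      finally have "\<bar>g p \<bullet> w\<bar>\<^sup>2 \<le> (eg * norm w)\<^sup>2" by (intro power_mono) auto
      then have "(g p \<bullet> w)\<^sup>2 \<le> (eg * norm w)\<^sup>2" by simp
      also have "\<dots> = eg * eg * (norm w)\<^sup>2" by (simp add: power2_eq_square)
      also have "\<dots> \<le> eg * (norm w)\<^sup>2" using eg by (intro mult_right_mono) (auto simp: mult_le_one)
      finally have "K * (g p \<bullet> w)\<^sup>2 \<le> K * (eg * (norm w)\<^sup>2)" using Kp by (intro mult_left_mono) auto
      also have "\<dots> \<le> K * ((lam0 / (8*K)) * (norm w)\<^sup>2)" using Kp eg by (intro mult_left_mono mult_right_mono) auto
      also have "\<dots> = (lam0/8) * (norm w)\<^sup>2" using Kp by (simp add: field_simps)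
      finally show ?thesis .
    qed
    show "w \<bullet> H q w \<ge> lam0/4 * (norm w)\<^sup>2"
      using KT[of w] e1 e2 unfolding abs_le_iff by (simp add: algebra_simps)
  qed
qed

end


theorem theorem2:
  fixes D :: "'a::euclidean_space set" and p :: 'a
  assumes "open D" and "connected D" and "D \<noteq> {}" and "convex D"
    and "p \<in> frontier D"
    and "strictly_convex_point D p"
  shows "(squeezing D \<longlongrightarrow> 1) (at p within D)"
proof -
  obtain U rho g H where U: "open U" "p \<in> U"
    and drho: "\<forall>x\<in>U. (rho has_derivative (\<lambda>v. g x \<bullet> v)) (at x)"
    and dg: "\<forall>x\<in>U. (g has_derivative blinfun_apply (H x)) (at x)"
    and cH: "continuous_on U H" and gnz: "\<forall>x\<in>U. g x \<noteq> 0"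
    and DU: "D \<inter> U = {x\<in>U. rho x < 0}"
    and pos: "\<forall>v. v \<noteq> 0 \<and> g p \<bullet> v = 0 \<longrightarrow> v \<bullet> blinfun_apply (H p) v > 0"
    using assms(6) unfolding strictly_convex_point_def by blast
  interpret s: scp D p U rho g H
    by (rule scp.intro) (use assms U drho dg cH gnz DU pos in auto)
  obtain lam M gp r1 where c: "scp_c D p U rho g H lam M gp r1" by (rule s.consts_exist)
  interpret c: scp_c D p U rho g H lam M gp r1 by (rule c)
  have isH: "isCont H p" using cH U continuous_on_eq_continuous_at by blast
  show ?thesis
    unfolding tendsto_iff
  proof (intro allI impI)
    fix e :: real assume e: "e > 0"
    define eta where "eta = min (e/2) (1/2)"
    have eta: "0 < eta" "eta \<le> 1/2" "eta < e" using e by (auto simp: eta_def)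
    define om where "om = (eta/4) * lam / 9"
    have om: "om > 0" "om \<le> lam / 9" "9 * om \<le> (eta/4) * lam"
      using eta c.lam by (auto simp: om_def)
    obtain d1 where d1: "d1 > 0" "\<And>x. dist x p < d1 \<Longrightarrow> dist (H x) (H p) < om/2"
      using isH om unfolding continuous_at_eps_delta by (meson half_gt_zero)
    define r where "r = min (r1/2) (d1/4)"
    have r: "r > 0" "2 * r \<le> r1" using c.r1 d1 by (auto simp: r_def)
    have Hp: "norm (H x - H p) \<le> om/2" if "x \<in> cball p (2*r)" for x
    proof -
      have "dist x p < d1" using that d1 by (auto simp: r_def dist_commute)
      then show ?thesis using d1(2) by (simp add: dist_norm less_imp_le)
    qed
    interpret t: scp_t D p U rho g H lam M gp r1 om r
      by (intro scp_t.intro c scp_t_axioms.intro om(1,2) r Hp)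
    obtain dl where dl: "dl > 0" "\<And>z. z \<in> D \<Longrightarrow> dist z p < dl \<Longrightarrow> (1 - eta) \<in> squeeze_radii D z"
      using t.final_local[OF eta(1,2) om(3)] by blast
    show "\<forall>\<^sub>F x in at p within D. dist (squeezing D x) 1 < e"
      unfolding eventually_at
    proof (intro exI[of _ dl] conjI dl(1) ballI impI)
      fix z assume z: "z \<in> D" "z \<noteq> p \<and> dist z p < dl"
      have rz: "(1 - eta) \<in> squeeze_radii D z" using dl(2) z by blast
      have "1 - eta \<le> squeezing D z" "squeezing D z \<le> 1"
        using squeezing_ge[OF rz] by auto
      then show "dist (squeezing D z) 1 < e" using eta by (simp add: dist_real_def)
    qed
  qed
qed

end
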